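(* Let $G$ be a uniform pro-$p$ group, let $R$ and $S$ be Banach–Tate $\mathbb{Z}_p$-algebras, and let $f:R\to S$ be a bounded ring homomorphism. Suppose there is a multiplicative pseudo-uniformizer $\varpi\in R$ such that $f(\varpi)$ is multiplicative in $S$. Then for every $r\in[1/p,1)$ the natural map $\mathcal{D}^r(G,R)\widehat{\otimes}_RS\to\mathcal{D}^r(G,S)$ is an isomorphism of Banach $S$-modules.
   Context: A Banach–Tate $\mathbb{Z}_p$-algebra is a complete non-archimedean normed ring $R$ with a unit $\varpi$ satisfying $|\varpi|<1$ and $|\varpi s|=|\varpi||s|$ for all $s$ (a multiplicative pseudo-uniformizer), together with a ring map $\mathbb{Z}_p\to R$ with $|x|\le|x|_p$. A ring map $f$ is bounded if $|f(r)|\le C|r|$ for some constant $C$. For $G$ uniform with minimal ordered topological generators $g_1,\dots,g_d$, $b_i=\delta_{g_i}-1$, $\mathbf{b}^\alpha=\prod b_i^{\alpha_i}$, $\mathcal{D}^r(G,R)=\{\sum_\alpha d_\alpha\mathbf{b}^\alpha:d_\alpha\in R,\ |d_\alpha|r^{|\alpha|}\to0\}$ with norm $\sup_\alpha|d_\alpha|r^{|\alpha|}$ (the completion of the continuous distribution algebra $\mathcal{D}(G,R)$). $\widehat{\otimes}$ denotes the completed tensor product with respect to the tensor product norm. *)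

theory Defs
  imports "HOL-Analysis.Analysis" "HOL-Algebra.Coset" "HOL-Algebra.Generated_Groups"
begin

definition top_group :: "('g, 'b) monoid_scheme \<Rightarrow> 'g topology \<Rightarrow> bool" where
  "top_group G T \<longleftrightarrow> group G \<and> topspace T = carrier G
     \<and> continuous_map (prod_topology T T) T (\<lambda>(x, y). x \<otimes>\<^bsub>G\<^esub> y)
     \<and> continuous_map T T (\<lambda>x. inv\<^bsub>G\<^esub> x)"

definition pro_p_group :: "nat \<Rightarrow> ('g, 'b) monoid_scheme \<Rightarrow> 'g topology \<Rightarrow> bool" where
  "pro_p_group p G T \<longleftrightarrow> top_group G T \<and> compact_space T \<and> Hausdorff_space T
     \<and> (\<forall>x \<in> topspace T. connected_component_of_set T x = {x})
     \<and> (\<forall>N. N \<lhd> G \<and> openin T N \<longrightarrow> (\<exists>k. card (rcosets\<^bsub>G\<^esub> N) = p ^ k))"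

definition top_generates :: "('g, 'b) monoid_scheme \<Rightarrow> 'g topology \<Rightarrow> 'g set \<Rightarrow> bool" where
  "top_generates G T X \<longleftrightarrow> X \<subseteq> carrier G \<and> T closure_of (generate G X) = carrier G"

definition top_fin_gen :: "('g, 'b) monoid_scheme \<Rightarrow> 'g topology \<Rightarrow> bool" where
  "top_fin_gen G T \<longleftrightarrow> (\<exists>X. finite X \<and> top_generates G T X)"

definition gcomm :: "('g, 'b) monoid_scheme \<Rightarrow> 'g \<Rightarrow> 'g \<Rightarrow> 'g" where
  "gcomm G x y = x \<otimes>\<^bsub>G\<^esub> y \<otimes>\<^bsub>G\<^esub> inv\<^bsub>G\<^esub> x \<otimes>\<^bsub>G\<^esub> inv\<^bsub>G\<^esub> y"

definition powerful :: "nat \<Rightarrow> ('g, 'b) monoid_scheme \<Rightarrow> 'g topology \<Rightarrow> bool" where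
  "powerful p G T \<longleftrightarrow>
     generate G {gcomm G x y | x y. x \<in> carrier G \<and> y \<in> carrier G}
       \<subseteq> T closure_of generate G {x [^]\<^bsub>G\<^esub> (if p = 2 then 4 else p) | x. x \<in> carrier G}"

text \<open>Lower p-series, shifted: lower_p_series p G T i is P_{i+1}(G).\<close>
primrec lower_p_series :: "nat \<Rightarrow> ('g, 'b) monoid_scheme \<Rightarrow> 'g topology \<Rightarrow> nat \<Rightarrow> 'g set" where
  "lower_p_series p G T 0 = carrier G"
| "lower_p_series p G T (Suc i) = T closure_of generate G
     ({x [^]\<^bsub>G\<^esub> p | x. x \<in> lower_p_series p G T i}
      \<union> {gcomm G x y | x y. x \<in> lower_p_series p G T i \<and> y \<in> carrier G})"

definition sub_index :: "('g, 'b) monoid_scheme \<Rightarrow> 'g set \<Rightarrow> 'g set \<Rightarrow> nat" where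
  "sub_index G H K = card (rcosets\<^bsub>G\<lparr>carrier := H\<rparr>\<^esub> K)"

definition uniform_pro_p :: "nat \<Rightarrow> ('g, 'b) monoid_scheme \<Rightarrow> 'g topology \<Rightarrow> bool" where
  "uniform_pro_p p G T \<longleftrightarrow> pro_p_group p G T \<and> top_fin_gen G T \<and> powerful p G T
     \<and> (\<forall>i. sub_index G (lower_p_series p G T i) (lower_p_series p G T (Suc i))
            = sub_index G (lower_p_series p G T 0) (lower_p_series p G T 1))"

text \<open>g_1, ..., g_d (indexed 0..d-1) is a minimal ordered system of topological generators.\<close>
definition min_top_generators :: "('g, 'b) monoid_scheme \<Rightarrow> 'g topology \<Rightarrow> nat \<Rightarrow> (nat \<Rightarrow> 'g) \<Rightarrow> bool" where
  "min_top_generators G T d g \<longleftrightarrow> top_generates G T (g ` {..<d}) \<and> inj_on g {..<d}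
     \<and> (\<forall>X. finite X \<and> top_generates G T X \<longrightarrow> d \<le> card X)"

text \<open>Z_p as compatible systems of residues x n in [0, p^n).\<close>
definition zp :: "nat \<Rightarrow> (nat \<Rightarrow> int) set" where
  "zp p = {x. \<forall>n. 0 \<le> x n \<and> x n < int p ^ n \<and> x (Suc n) mod int p ^ n = x n}"

definition zp_add :: "nat \<Rightarrow> (nat \<Rightarrow> int) \<Rightarrow> (nat \<Rightarrow> int) \<Rightarrow> nat \<Rightarrow> int" where
  "zp_add p x y = (\<lambda>n. (x n + y n) mod int p ^ n)"
definition zp_mult :: "nat \<Rightarrow> (nat \<Rightarrow> int) \<Rightarrow> (nat \<Rightarrow> int) \<Rightarrow> nat \<Rightarrow> int" where
  "zp_mult p x y = (\<lambda>n. (x n * y n) mod int p ^ n)"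
definition zp_one :: "nat \<Rightarrow> nat \<Rightarrow> int" where
  "zp_one p = (\<lambda>n. 1 mod int p ^ n)"

definition padic_abs :: "nat \<Rightarrow> (nat \<Rightarrow> int) \<Rightarrow> real" where
  "padic_abs p x = (if (\<forall>n. x n = 0) then 0
                    else (1 / real p) ^ (LEAST n. x (Suc n) \<noteq> 0))"

definition nonarch_norm :: "('a::comm_ring_1 \<Rightarrow> real) \<Rightarrow> bool" where
  "nonarch_norm N \<longleftrightarrow> (\<forall>x. N x \<ge> 0) \<and> (\<forall>x. N x = 0 \<longleftrightarrow> x = 0)
     \<and> (\<forall>x y. N (x + y) \<le> max (N x) (N y)) \<and> (\<forall>x. N (- x) = N x)
     \<and> (\<forall>x y. N (x * y) \<le> N x * N y)"

definition norm_complete :: "('a::comm_ring_1 \<Rightarrow> real) \<Rightarrow> bool" where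
  "norm_complete N \<longleftrightarrow> (\<forall>u :: nat \<Rightarrow> 'a.
     (\<forall>e>0. \<exists>K. \<forall>m\<ge>K. \<forall>n\<ge>K. N (u m - u n) < e) \<longrightarrow> (\<exists>l. (\<lambda>n. N (u n - l)) \<longlonglongrightarrow> 0))"

definition mult_elem :: "('a::comm_ring_1 \<Rightarrow> real) \<Rightarrow> 'a \<Rightarrow> bool" where
  "mult_elem N w \<longleftrightarrow> (\<forall>s. N (w * s) = N w * N s)"

definition mult_pseudo_unif :: "('a::comm_ring_1 \<Rightarrow> real) \<Rightarrow> 'a \<Rightarrow> bool" where
  "mult_pseudo_unif N w \<longleftrightarrow> (\<exists>v. w * v = 1) \<and> N w < 1 \<and> mult_elem N w"

definition banach_tate_zp :: "nat \<Rightarrow> ('a::comm_ring_1 \<Rightarrow> real) \<Rightarrow> ((nat \<Rightarrow> int) \<Rightarrow> 'a) \<Rightarrow> bool" where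
  "banach_tate_zp p N \<iota> \<longleftrightarrow> nonarch_norm N \<and> norm_complete N
     \<and> (\<exists>w. mult_pseudo_unif N w)
     \<and> \<iota> (zp_one p) = 1
     \<and> (\<forall>x\<in>zp p. \<forall>y\<in>zp p. \<iota> (zp_add p x y) = \<iota> x + \<iota> y \<and> \<iota> (zp_mult p x y) = \<iota> x * \<iota> y)
     \<and> (\<forall>x\<in>zp p. N (\<iota> x) \<le> padic_abs p x)"

definition bounded_ring_hom :: "('a::comm_ring_1 \<Rightarrow> real) \<Rightarrow> ('b::comm_ring_1 \<Rightarrow> real) \<Rightarrow> ('a \<Rightarrow> 'b) \<Rightarrow> bool" where
  "bounded_ring_hom NR NS f \<longleftrightarrow> f 1 = 1 \<and> (\<forall>x y. f (x + y) = f x + f y \<and> f (x * y) = f x * f y)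
     \<and> (\<exists>C. \<forall>x. NS (f x) \<le> C * NR x)"

section \<open>The Banach module D^r(G,R) (coefficients d_alpha of sum d_alpha b^alpha)\<close>

definition multi_idx :: "nat \<Rightarrow> (nat \<Rightarrow> nat) set" where
  "multi_idx d = {\<alpha>. \<forall>i\<ge>d. \<alpha> i = 0}"

definition mdeg :: "nat \<Rightarrow> (nat \<Rightarrow> nat) \<Rightarrow> nat" where
  "mdeg d \<alpha> = (\<Sum>i<d. \<alpha> i)"

definition Dr :: "nat \<Rightarrow> real \<Rightarrow> ('a::comm_ring_1 \<Rightarrow> real) \<Rightarrow> ((nat \<Rightarrow> nat) \<Rightarrow> 'a) set" where
  "Dr d r N = {c. (\<forall>\<alpha>. \<alpha> \<notin> multi_idx d \<longrightarrow> c \<alpha> = 0)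
      \<and> (\<forall>e>0. finite {\<alpha> \<in> multi_idx d. N (c \<alpha>) * r ^ mdeg d \<alpha> \<ge> e})}"

definition dnorm :: "nat \<Rightarrow> real \<Rightarrow> ('a::comm_ring_1 \<Rightarrow> real) \<Rightarrow> ((nat \<Rightarrow> nat) \<Rightarrow> 'a) \<Rightarrow> real" where
  "dnorm d r N c = (SUP \<alpha>\<in>multi_idx d. N (c \<alpha>) * r ^ mdeg d \<alpha>)"

text \<open>Elements of the free abelian group on D^r(G,R) x S are Z-valued functions;
  a list of pairs (m,t) stands for the sum of the pure tensors m \<otimes> t.\<close>
definition tdelta :: "'a \<Rightarrow> 'a \<Rightarrow> int" where
  "tdelta a = (\<lambda>b. if b = a then 1 else 0)"

inductive_set tens_rel :: "nat \<Rightarrow> real \<Rightarrow> ('r::comm_ring_1 \<Rightarrow> real) \<Rightarrow> ('r \<Rightarrow> 's::comm_ring_1)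
    \<Rightarrow> (((nat \<Rightarrow> nat) \<Rightarrow> 'r) \<times> 's \<Rightarrow> int) set"
  for d r NR f where
  tr_zero: "(\<lambda>_. 0) \<in> tens_rel d r NR f"
| tr_diff: "x \<in> tens_rel d r NR f \<Longrightarrow> y \<in> tens_rel d r NR f \<Longrightarrow> (\<lambda>q. x q - y q) \<in> tens_rel d r NR f"
| tr_addL: "m1 \<in> Dr d r NR \<Longrightarrow> m2 \<in> Dr d r NR \<Longrightarrow>
    (\<lambda>q. tdelta (\<lambda>\<alpha>. m1 \<alpha> + m2 \<alpha>, t) q - tdelta (m1, t) q - tdelta (m2, t) q) \<in> tens_rel d r NR f"
| tr_addR: "m \<in> Dr d r NR \<Longrightarrow>
    (\<lambda>q. tdelta (m, t1 + t2) q - tdelta (m, t1) q - tdelta (m, t2) q) \<in> tens_rel d r NR f"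
| tr_scal: "m \<in> Dr d r NR \<Longrightarrow>
    (\<lambda>q. tdelta (\<lambda>\<alpha>. a * m \<alpha>, t) q - tdelta (m, f a * t) q) \<in> tens_rel d r NR f"

definition tfree :: "'a list \<Rightarrow> 'a \<Rightarrow> int" where
  "tfree xs = (\<lambda>q. int (count_list xs q))"

definition tlists :: "nat \<Rightarrow> real \<Rightarrow> ('r::comm_ring_1 \<Rightarrow> real) \<Rightarrow> (((nat \<Rightarrow> nat) \<Rightarrow> 'r) \<times> 's) list set" where
  "tlists d r NR = {xs. \<forall>(m, t) \<in> set xs. m \<in> Dr d r NR}"

definition teq :: "nat \<Rightarrow> real \<Rightarrow> ('r::comm_ring_1 \<Rightarrow> real) \<Rightarrow> ('r \<Rightarrow> 's::comm_ring_1)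
    \<Rightarrow> (((nat \<Rightarrow> nat) \<Rightarrow> 'r) \<times> 's) list \<Rightarrow> (((nat \<Rightarrow> nat) \<Rightarrow> 'r) \<times> 's) list \<Rightarrow> bool" where
  "teq d r NR f xs ys \<longleftrightarrow> (\<lambda>q. tfree xs q - tfree ys q) \<in> tens_rel d r NR f"

definition tneg :: "('m \<times> 's::comm_ring_1) list \<Rightarrow> ('m \<times> 's) list" where
  "tneg xs = map (\<lambda>(m, t). (m, - t)) xs"

definition tdiff :: "('m \<times> 's::comm_ring_1) list \<Rightarrow> ('m \<times> 's) list \<Rightarrow> ('m \<times> 's) list" where
  "tdiff xs ys = xs @ tneg ys"

definition tscale :: "'s::comm_ring_1 \<Rightarrow> ('m \<times> 's) list \<Rightarrow> ('m \<times> 's) list" where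
  "tscale s xs = map (\<lambda>(m, t). (m, s * t)) xs"

definition tcost :: "nat \<Rightarrow> real \<Rightarrow> ('r::comm_ring_1 \<Rightarrow> real) \<Rightarrow> ('s::comm_ring_1 \<Rightarrow> real)
    \<Rightarrow> (((nat \<Rightarrow> nat) \<Rightarrow> 'r) \<times> 's) list \<Rightarrow> real" where
  "tcost d r NR NS ys = Max (insert 0 ((\<lambda>(m, t). dnorm d r NR m * NS t) ` set ys))"

definition tnorm :: "nat \<Rightarrow> real \<Rightarrow> ('r::comm_ring_1 \<Rightarrow> real) \<Rightarrow> ('s::comm_ring_1 \<Rightarrow> real) \<Rightarrow> ('r \<Rightarrow> 's)
    \<Rightarrow> (((nat \<Rightarrow> nat) \<Rightarrow> 'r) \<times> 's) list \<Rightarrow> real" where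
  "tnorm d r NR NS f xs = Inf (tcost d r NR NS ` {ys \<in> tlists d r NR. teq d r NR f ys xs})"

text \<open>Completion: Cauchy sequences of tensors, modulo null sequences.\<close>
definition tcauchy :: "nat \<Rightarrow> real \<Rightarrow> ('r::comm_ring_1 \<Rightarrow> real) \<Rightarrow> ('s::comm_ring_1 \<Rightarrow> real) \<Rightarrow> ('r \<Rightarrow> 's)
    \<Rightarrow> (nat \<Rightarrow> (((nat \<Rightarrow> nat) \<Rightarrow> 'r) \<times> 's) list) \<Rightarrow> bool" where
  "tcauchy d r NR NS f u \<longleftrightarrow> (\<forall>n. u n \<in> tlists d r NR)
     \<and> (\<forall>e>0. \<exists>K. \<forall>m\<ge>K. \<forall>n\<ge>K. tnorm d r NR NS f (tdiff (u m) (u n)) < e)"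

definition cequiv :: "nat \<Rightarrow> real \<Rightarrow> ('r::comm_ring_1 \<Rightarrow> real) \<Rightarrow> ('s::comm_ring_1 \<Rightarrow> real) \<Rightarrow> ('r \<Rightarrow> 's)
    \<Rightarrow> (nat \<Rightarrow> (((nat \<Rightarrow> nat) \<Rightarrow> 'r) \<times> 's) list) \<Rightarrow> (nat \<Rightarrow> (((nat \<Rightarrow> nat) \<Rightarrow> 'r) \<times> 's) list) \<Rightarrow> bool" where
  "cequiv d r NR NS f u v \<longleftrightarrow> (\<lambda>n. tnorm d r NR NS f (tdiff (u n) (v n))) \<longlonglongrightarrow> 0"

definition cnorm :: "nat \<Rightarrow> real \<Rightarrow> ('r::comm_ring_1 \<Rightarrow> real) \<Rightarrow> ('s::comm_ring_1 \<Rightarrow> real) \<Rightarrow> ('r \<Rightarrow> 's)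
    \<Rightarrow> (nat \<Rightarrow> (((nat \<Rightarrow> nat) \<Rightarrow> 'r) \<times> 's) list) \<Rightarrow> real" where
  "cnorm d r NR NS f u = lim (\<lambda>n. tnorm d r NR NS f (u n))"

text \<open>The natural map on pure tensors: (sum d_alpha b^alpha) \<otimes> s \<mapsto> sum f(d_alpha) s b^alpha.\<close>
definition tphi :: "('r \<Rightarrow> 's::comm_ring_1) \<Rightarrow> (((nat \<Rightarrow> nat) \<Rightarrow> 'r) \<times> 's) list \<Rightarrow> (nat \<Rightarrow> nat) \<Rightarrow> 's" where
  "tphi f xs = (\<lambda>\<alpha>. sum_list (map (\<lambda>(m, t). f (m \<alpha>) * t) xs))"

text \<open>nat_map u y: the continuous extension of the natural map sends the class of u to y.\<close>
definition nat_map :: "nat \<Rightarrow> real \<Rightarrow> ('r::comm_ring_1 \<Rightarrow> real) \<Rightarrow> ('s::comm_ring_1 \<Rightarrow> real) \<Rightarrow> ('r \<Rightarrow> 's)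
    \<Rightarrow> (nat \<Rightarrow> (((nat \<Rightarrow> nat) \<Rightarrow> 'r) \<times> 's) list) \<Rightarrow> ((nat \<Rightarrow> nat) \<Rightarrow> 's) \<Rightarrow> bool" where
  "nat_map d r NR NS f u y \<longleftrightarrow> y \<in> Dr d r NS
     \<and> (\<lambda>n. dnorm d r NS (\<lambda>\<alpha>. tphi f (u n) \<alpha> - y \<alpha>)) \<longlonglongrightarrow> 0"

text \<open>The natural map from the completed tensor product to D^r(G,S) is an isomorphism of
  Banach S-modules: a well-defined S-linear bijection, bounded with bounded inverse.\<close>
definition natural_map_iso :: "nat \<Rightarrow> real \<Rightarrow> ('r::comm_ring_1 \<Rightarrow> real) \<Rightarrow> ('s::comm_ring_1 \<Rightarrow> real)
    \<Rightarrow> ('r \<Rightarrow> 's) \<Rightarrow> bool" where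
  "natural_map_iso d r NR NS f \<longleftrightarrow>
     (\<forall>u. tcauchy d r NR NS f u \<longrightarrow> (\<exists>!y. nat_map d r NR NS f u y))
   \<and> (\<forall>u v y. tcauchy d r NR NS f u \<and> tcauchy d r NR NS f v \<and> cequiv d r NR NS f u v
        \<and> nat_map d r NR NS f u y \<longrightarrow> nat_map d r NR NS f v y)
   \<and> (\<forall>u v y. tcauchy d r NR NS f u \<and> tcauchy d r NR NS f v
        \<and> nat_map d r NR NS f u y \<and> nat_map d r NR NS f v y \<longrightarrow> cequiv d r NR NS f u v)
   \<and> (\<forall>y \<in> Dr d r NS. \<exists>u. tcauchy d r NR NS f u \<and> nat_map d r NR NS f u y)
   \<and> (\<forall>u v y z s. tcauchy d r NR NS f u \<and> tcauchy d r NR NS f v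
        \<and> nat_map d r NR NS f u y \<and> nat_map d r NR NS f v z \<longrightarrow>
          nat_map d r NR NS f (\<lambda>n. u n @ v n) (\<lambda>\<alpha>. y \<alpha> + z \<alpha>)
        \<and> nat_map d r NR NS f (\<lambda>n. tscale s (u n)) (\<lambda>\<alpha>. s * y \<alpha>))
   \<and> (\<exists>C. \<forall>u y. tcauchy d r NR NS f u \<and> nat_map d r NR NS f u y
        \<longrightarrow> dnorm d r NS y \<le> C * cnorm d r NR NS f u)
   \<and> (\<exists>C. \<forall>u y. tcauchy d r NR NS f u \<and> nat_map d r NR NS f u y
        \<longrightarrow> cnorm d r NR NS f u \<le> C * dnorm d r NS y)"

end

theory Submission
  imports Defs
begin


locale nn =
  fixes N :: "'a::comm_ring_1 \<Rightarrow> real" and d :: nat and r :: real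
  assumes nonarch: "nonarch_norm N" and rpos: "r > 0"
begin

lemma N_nonneg: "N x \<ge> 0" using nonarch unfolding nonarch_norm_def by blast
lemma N_zero_iff: "N x = 0 \<longleftrightarrow> x = 0" using nonarch unfolding nonarch_norm_def by blast
lemma N_add: "N (x + y) \<le> max (N x) (N y)" using nonarch unfolding nonarch_norm_def by blast
lemma N_neg: "N (- x) = N x" using nonarch unfolding nonarch_norm_def by blast
lemma N_mult: "N (x * y) \<le> N x * N y" using nonarch unfolding nonarch_norm_def by blast
lemma N_0[simp]: "N 0 = 0" using N_zero_iff by blast
lemma N_diff: "N (x - y) \<le> max (N x) (N y)"
  using N_add[of x "-y"] N_neg[of y] by simp
lemma N_minus_comm: "N (x - y) = N (y - x)"
  using N_neg[of "y - x"] by simp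
lemma N_tri: "N x \<le> N y + N (x - y)"
  using N_add[of y "x - y"] N_nonneg[of y] N_nonneg[of "x-y"] by simp

definition tm :: "((nat \<Rightarrow> nat) \<Rightarrow> 'a) \<Rightarrow> (nat \<Rightarrow> nat) \<Rightarrow> real" where
  "tm c \<alpha> = N (c \<alpha>) * r ^ mdeg d \<alpha>"

lemma rpow_pos: "r ^ k > 0" using rpos by simp

lemma tm_nonneg: "tm c \<alpha> \<ge> 0" unfolding tm_def using N_nonneg rpow_pos
  by (simp add: less_imp_le)

lemma zero_multi: "(\<lambda>_. 0) \<in> multi_idx d" unfolding multi_idx_def by simp

lemma Dr_out: "c \<in> Dr d r N \<Longrightarrow> \<alpha> \<notin> multi_idx d \<Longrightarrow> c \<alpha> = 0"
  unfolding Dr_def by blast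

lemma Dr_fin: "c \<in> Dr d r N \<Longrightarrow> e > 0 \<Longrightarrow> finite {\<alpha> \<in> multi_idx d. tm c \<alpha> \<ge> e}"
  unfolding Dr_def tm_def by blast

lemma DrI: "(\<And>\<alpha>. \<alpha> \<notin> multi_idx d \<Longrightarrow> c \<alpha> = 0) \<Longrightarrow>
   (\<And>e. e > 0 \<Longrightarrow> finite {\<alpha> \<in> multi_idx d. tm c \<alpha> \<ge> e}) \<Longrightarrow> c \<in> Dr d r N"
  unfolding Dr_def tm_def by blast

lemma dnorm_tm: "dnorm d r N c = (SUP \<alpha>\<in>multi_idx d. tm c \<alpha>)"
  unfolding dnorm_def tm_def by simp

lemma Dr_bdd: assumes "c \<in> Dr d r N" shows "bdd_above (tm c ` multi_idx d)"
proof -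
  let ?S = "{\<alpha> \<in> multi_idx d. tm c \<alpha> \<ge> 1}"
  have f: "finite ?S" using Dr_fin[OF assms] by simp
  have "tm c ` multi_idx d \<subseteq> tm c ` ?S \<union> {..1}" by force
  moreover have "bdd_above (tm c ` ?S \<union> {..1})" using f by simp
  ultimately show ?thesis by (rule bdd_above_mono[rotated])
qed

lemma dnorm_ge: "c \<in> Dr d r N \<Longrightarrow> \<alpha> \<in> multi_idx d \<Longrightarrow> tm c \<alpha> \<le> dnorm d r N c"
  unfolding dnorm_tm by (rule cSUP_upper) (auto intro: Dr_bdd)

lemma dnorm_le: "(\<And>\<alpha>. \<alpha> \<in> multi_idx d \<Longrightarrow> tm c \<alpha> \<le> B) \<Longrightarrow> dnorm d r N c \<le> B"
  unfolding dnorm_tm by (rule cSUP_least) (use zero_multi in auto)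

lemma dnorm_nonneg: "c \<in> Dr d r N \<Longrightarrow> dnorm d r N c \<ge> 0"
  using dnorm_ge[of c, OF _ zero_multi] tm_nonneg[of c] by (meson order_trans)

lemma dnorm_zero: assumes "c \<in> Dr d r N" "dnorm d r N c \<le> 0" shows "c \<alpha> = 0"
proof (cases "\<alpha> \<in> multi_idx d")
  case True
  have "tm c \<alpha> \<le> 0" using dnorm_ge[OF assms(1) True] assms(2) by simp
  hence "N (c \<alpha>) \<le> 0" unfolding tm_def using rpow_pos[of "mdeg d \<alpha>"]
    by (simp add: mult_le_0_iff)
  then show ?thesis using N_nonneg[of "c \<alpha>"] N_zero_iff by (simp add: order_antisym)
qed (use assms Dr_out in auto)

lemma tm_add: "tm (\<lambda>\<alpha>. a \<alpha> + b \<alpha>) \<alpha> \<le> max (tm a \<alpha>) (tm b \<alpha>)"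
  unfolding tm_def using N_add[of "a \<alpha>" "b \<alpha>"] rpow_pos[of "mdeg d \<alpha>"]
  by (metis max_mult_distrib_right mult_right_mono less_imp_le)

lemma tm_diff: "tm (\<lambda>\<alpha>. a \<alpha> - b \<alpha>) \<alpha> \<le> max (tm a \<alpha>) (tm b \<alpha>)"
  unfolding tm_def using N_diff[of "a \<alpha>" "b \<alpha>"] rpow_pos[of "mdeg d \<alpha>"]
  by (metis max_mult_distrib_right mult_right_mono less_imp_le)

lemma tm_scale: "tm (\<lambda>\<alpha>. s * a \<alpha>) \<alpha> \<le> N s * tm a \<alpha>"
  unfolding tm_def using N_mult[of s "a \<alpha>"] rpow_pos[of "mdeg d \<alpha>"]
  by (simp add: mult.assoc mult_right_mono less_imp_le)

lemma tm_neg: "tm (\<lambda>\<alpha>. - a \<alpha>) \<alpha> = tm a \<alpha>" unfolding tm_def by (simp add: N_neg)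

lemma Dr_add: assumes "a \<in> Dr d r N" "b \<in> Dr d r N" shows "(\<lambda>\<alpha>. a \<alpha> + b \<alpha>) \<in> Dr d r N"
proof (rule DrI)
  fix e :: real assume e: "e > 0"
  have "{\<alpha> \<in> multi_idx d. tm (\<lambda>\<alpha>. a \<alpha> + b \<alpha>) \<alpha> \<ge> e} \<subseteq>
     {\<alpha> \<in> multi_idx d. tm a \<alpha> \<ge> e} \<union> {\<alpha> \<in> multi_idx d. tm b \<alpha> \<ge> e}"
  proof (intro subsetI)
    fix \<alpha> assume A: "\<alpha> \<in> {\<alpha> \<in> multi_idx d. tm (\<lambda>\<alpha>. a \<alpha> + b \<alpha>) \<alpha> \<ge> e}"
    then have "e \<le> max (tm a \<alpha>) (tm b \<alpha>)" using tm_add[of a b \<alpha>] by simp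
    then show "\<alpha> \<in> {\<alpha> \<in> multi_idx d. tm a \<alpha> \<ge> e} \<union> {\<alpha> \<in> multi_idx d. tm b \<alpha> \<ge> e}"
      using A by (auto simp: le_max_iff_disj)
  qed
  then show "finite {\<alpha> \<in> multi_idx d. tm (\<lambda>\<alpha>. a \<alpha> + b \<alpha>) \<alpha> \<ge> e}"
    using Dr_fin[OF assms(1) e] Dr_fin[OF assms(2) e] finite_subset by blast
qed (simp_all add: Dr_out[OF assms(1)] Dr_out[OF assms(2)])

lemma Dr_diff: assumes "a \<in> Dr d r N" "b \<in> Dr d r N" shows "(\<lambda>\<alpha>. a \<alpha> - b \<alpha>) \<in> Dr d r N"
proof (rule DrI)
  fix e :: real assume e: "e > 0"
  have "{\<alpha> \<in> multi_idx d. tm (\<lambda>\<alpha>. a \<alpha> - b \<alpha>) \<alpha> \<ge> e} \<subseteq>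
     {\<alpha> \<in> multi_idx d. tm a \<alpha> \<ge> e} \<union> {\<alpha> \<in> multi_idx d. tm b \<alpha> \<ge> e}"
  proof (intro subsetI)
    fix \<alpha> assume A: "\<alpha> \<in> {\<alpha> \<in> multi_idx d. tm (\<lambda>\<alpha>. a \<alpha> - b \<alpha>) \<alpha> \<ge> e}"
    then have "e \<le> max (tm a \<alpha>) (tm b \<alpha>)" using tm_diff[of a b \<alpha>] by simp
    then show "\<alpha> \<in> {\<alpha> \<in> multi_idx d. tm a \<alpha> \<ge> e} \<union> {\<alpha> \<in> multi_idx d. tm b \<alpha> \<ge> e}"
      using A by (auto simp: le_max_iff_disj)
  qed
  then show "finite {\<alpha> \<in> multi_idx d. tm (\<lambda>\<alpha>. a \<alpha> - b \<alpha>) \<alpha> \<ge> e}"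
    using Dr_fin[OF assms(1) e] Dr_fin[OF assms(2) e] finite_subset by blast
qed (simp_all add: Dr_out[OF assms(1)] Dr_out[OF assms(2)])

lemma Dr_scale: assumes "a \<in> Dr d r N" shows "(\<lambda>\<alpha>. s * a \<alpha>) \<in> Dr d r N"
proof (rule DrI)
  fix e :: real assume e: "e > 0"
  show "finite {\<alpha> \<in> multi_idx d. tm (\<lambda>\<alpha>. s * a \<alpha>) \<alpha> \<ge> e}"
  proof (cases "N s = 0")
    case True
    have "tm (\<lambda>\<alpha>. s * a \<alpha>) \<alpha> < e" for \<alpha> using tm_scale[of s a \<alpha>] True e by simp
    then have E: "{\<alpha> \<in> multi_idx d. tm (\<lambda>\<alpha>. s * a \<alpha>) \<alpha> \<ge> e} = {}"
      by (simp add: not_le)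
    show ?thesis unfolding E by simp
  next
    case False
    then have sp: "N s > 0" using N_nonneg[of s] by simp
    have "{\<alpha> \<in> multi_idx d. tm (\<lambda>\<alpha>. s * a \<alpha>) \<alpha> \<ge> e} \<subseteq> {\<alpha> \<in> multi_idx d. tm a \<alpha> \<ge> e / N s}"
    proof safe
      fix \<alpha> assume "e \<le> tm (\<lambda>\<alpha>. s * a \<alpha>) \<alpha>"
      then have "e \<le> N s * tm a \<alpha>" using tm_scale[of s a \<alpha>] by simp
      then show "e / N s \<le> tm a \<alpha>" using sp by (simp add: divide_le_eq mult.commute)
    qed
    then show ?thesis using Dr_fin[OF assms, of "e / N s"] e sp finite_subset by auto
  qed
qed (simp add: Dr_out[OF assms])

lemma Dr_zero: "(\<lambda>_. 0) \<in> Dr d r N"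
  by (rule DrI) (auto simp: tm_def)

lemma dnorm_add: assumes "a \<in> Dr d r N" "b \<in> Dr d r N"
  shows "dnorm d r N (\<lambda>\<alpha>. a \<alpha> + b \<alpha>) \<le> max (dnorm d r N a) (dnorm d r N b)"
proof (rule dnorm_le)
  fix \<alpha> assume m: "\<alpha> \<in> multi_idx d"
  have "max (tm a \<alpha>) (tm b \<alpha>) \<le> max (dnorm d r N a) (dnorm d r N b)"
    using dnorm_ge[OF assms(1) m] dnorm_ge[OF assms(2) m] by (rule max.mono)
  then show "tm (\<lambda>\<alpha>. a \<alpha> + b \<alpha>) \<alpha> \<le> max (dnorm d r N a) (dnorm d r N b)"
    using tm_add[of a b \<alpha>] by linarith
qed

lemma dnorm_diff: assumes "a \<in> Dr d r N" "b \<in> Dr d r N"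
  shows "dnorm d r N (\<lambda>\<alpha>. a \<alpha> - b \<alpha>) \<le> max (dnorm d r N a) (dnorm d r N b)"
proof (rule dnorm_le)
  fix \<alpha> assume m: "\<alpha> \<in> multi_idx d"
  have "max (tm a \<alpha>) (tm b \<alpha>) \<le> max (dnorm d r N a) (dnorm d r N b)"
    using dnorm_ge[OF assms(1) m] dnorm_ge[OF assms(2) m] by (rule max.mono)
  then show "tm (\<lambda>\<alpha>. a \<alpha> - b \<alpha>) \<alpha> \<le> max (dnorm d r N a) (dnorm d r N b)"
    using tm_diff[of a b \<alpha>] by linarith
qed

lemma dnorm_scale: assumes "a \<in> Dr d r N"
  shows "dnorm d r N (\<lambda>\<alpha>. s * a \<alpha>) \<le> N s * dnorm d r N a"
proof (rule dnorm_le)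
  fix \<alpha> assume m: "\<alpha> \<in> multi_idx d"
  have "N s * tm a \<alpha> \<le> N s * dnorm d r N a"
    using dnorm_ge[OF assms m] N_nonneg[of s] by (rule mult_left_mono)
  then show "tm (\<lambda>\<alpha>. s * a \<alpha>) \<alpha> \<le> N s * dnorm d r N a" using tm_scale[of s a \<alpha>] by linarith
qed

lemma dnorm_neg: "dnorm d r N (\<lambda>\<alpha>. - a \<alpha>) = dnorm d r N a"
  unfolding dnorm_tm tm_neg ..

lemma dnorm_diff_comm: "dnorm d r N (\<lambda>\<alpha>. a \<alpha> - b \<alpha>) = dnorm d r N (\<lambda>\<alpha>. b \<alpha> - a \<alpha>)"
  using dnorm_neg[of "\<lambda>\<alpha>. b \<alpha> - a \<alpha>"] by simp

lemma dnorm_tri: assumes "a \<in> Dr d r N" "b \<in> Dr d r N"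
  shows "dnorm d r N a \<le> dnorm d r N b + dnorm d r N (\<lambda>\<alpha>. a \<alpha> - b \<alpha>)"
proof -
  have "a = (\<lambda>\<alpha>. b \<alpha> + (a \<alpha> - b \<alpha>))" by simp
  then have "dnorm d r N a \<le> max (dnorm d r N b) (dnorm d r N (\<lambda>\<alpha>. a \<alpha> - b \<alpha>))"
    using dnorm_add[OF assms(2) Dr_diff[OF assms]] by metis
  moreover have "dnorm d r N b \<ge> 0" "dnorm d r N (\<lambda>\<alpha>. a \<alpha> - b \<alpha>) \<ge> 0"
    using assms dnorm_nonneg Dr_diff by auto
  ultimately show ?thesis by linarith
qed

lemma dnorm_abs: assumes "a \<in> Dr d r N" "b \<in> Dr d r N"
  shows "\<bar>dnorm d r N a - dnorm d r N b\<bar> \<le> dnorm d r N (\<lambda>\<alpha>. a \<alpha> - b \<alpha>)"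
  using dnorm_tri[OF assms] dnorm_tri[OF assms(2,1)] dnorm_diff_comm[of a b] by linarith

lemma N_le_dnorm: assumes "c \<in> Dr d r N" "\<alpha> \<in> multi_idx d"
  shows "N (c \<alpha>) \<le> dnorm d r N c / r ^ mdeg d \<alpha>"
  using dnorm_ge[OF assms] rpow_pos[of "mdeg d \<alpha>"] unfolding tm_def
  by (simp add: le_divide_eq)

lemma Dr_complete:
  assumes cpl: "norm_complete N" and aD: "\<And>n. a n \<in> Dr d r N"
    and cau: "\<And>e. e > 0 \<Longrightarrow> \<exists>K. \<forall>m\<ge>K. \<forall>n\<ge>K. dnorm d r N (\<lambda>\<alpha>. a m \<alpha> - a n \<alpha>) < e"
  shows "\<exists>y \<in> Dr d r N. (\<lambda>n. dnorm d r N (\<lambda>\<alpha>. a n \<alpha> - y \<alpha>)) \<longlonglongrightarrow> 0"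
proof -
  have coef: "\<exists>l. (\<lambda>n. N (a n \<alpha> - l)) \<longlonglongrightarrow> 0" if m: "\<alpha> \<in> multi_idx d" for \<alpha>
  proof -
    have "\<exists>K. \<forall>m\<ge>K. \<forall>n\<ge>K. N (a m \<alpha> - a n \<alpha>) < e" if e: "e > 0" for e
    proof -
      have "e * r ^ mdeg d \<alpha> > 0" using e rpow_pos by simp
      from cau[OF this] obtain K where K: "\<forall>m\<ge>K. \<forall>n\<ge>K. dnorm d r N (\<lambda>\<alpha>. a m \<alpha> - a n \<alpha>) < e * r ^ mdeg d \<alpha>" by blast
      have "N (a m \<alpha> - a n \<alpha>) < e" if "m \<ge> K" "n \<ge> K" for m n
      proof -
        have "N (a m \<alpha> - a n \<alpha>) \<le> dnorm d r N (\<lambda>\<alpha>. a m \<alpha> - a n \<alpha>) / r ^ mdeg d \<alpha>"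
          using N_le_dnorm[OF Dr_diff[OF aD aD] m] by simp
        also have "\<dots> < e" using K that rpow_pos[of "mdeg d \<alpha>"] by (simp add: divide_less_eq)
        finally show ?thesis .
      qed
      then show ?thesis by blast
    qed
    moreover have "(\<forall>e>0. \<exists>K. \<forall>m\<ge>K. \<forall>n\<ge>K. N (a m \<alpha> - a n \<alpha>) < e) \<longrightarrow> (\<exists>l. (\<lambda>n. N (a n \<alpha> - l)) \<longlonglongrightarrow> 0)"
      using cpl unfolding norm_complete_def by (rule spec)
    ultimately show ?thesis by blast
  qed
  define y where "y = (\<lambda>\<alpha>. if \<alpha> \<in> multi_idx d then (SOME l. (\<lambda>n. N (a n \<alpha> - l)) \<longlonglongrightarrow> 0) else 0)"
  have ylim: "(\<lambda>n. N (a n \<alpha> - y \<alpha>)) \<longlonglongrightarrow> 0" if "\<alpha> \<in> multi_idx d" for \<alpha>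
    using someI_ex[OF coef[OF that]] that unfolding y_def by simp
  have key: "\<exists>K. \<forall>n\<ge>K. \<forall>\<alpha>\<in>multi_idx d. tm (\<lambda>\<alpha>. a n \<alpha> - y \<alpha>) \<alpha> \<le> e" if e: "e > 0" for e
  proof -
    obtain K where K: "\<forall>m\<ge>K. \<forall>n\<ge>K. dnorm d r N (\<lambda>\<alpha>. a m \<alpha> - a n \<alpha>) < e" using cau[OF e] by blast
    have "tm (\<lambda>\<alpha>. a n \<alpha> - y \<alpha>) \<alpha> \<le> e" if n: "n \<ge> K" and m: "\<alpha> \<in> multi_idx d" for n \<alpha>
    proof -
      have rp: "r ^ mdeg d \<alpha> > 0" by (rule rpow_pos)
      have "N (a n \<alpha> - y \<alpha>) \<le> e / r ^ mdeg d \<alpha> + \<delta>" if dp: "\<delta> > 0" for \<delta>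
      proof -
        obtain M where M: "\<forall>m\<ge>M. N (a m \<alpha> - y \<alpha>) < \<delta>"
        proof -
          obtain M where "\<forall>m\<ge>M. norm (N (a m \<alpha> - y \<alpha>) - 0) < \<delta>"
            using LIMSEQ_D[OF ylim[OF m] dp] by blast
          then show ?thesis using that by (simp add: abs_of_nonneg N_nonneg)
        qed
        let ?m = "max K M"
        have t1: "N (a n \<alpha> - y \<alpha>) \<le> N (a n \<alpha> - a ?m \<alpha>) + N ((a n \<alpha> - y \<alpha>) - (a n \<alpha> - a ?m \<alpha>))"
          by (rule N_tri)
        have t2: "(a n \<alpha> - y \<alpha>) - (a n \<alpha> - a ?m \<alpha>) = a ?m \<alpha> - y \<alpha>" by simp
        have t3: "N (a n \<alpha> - a ?m \<alpha>) \<le> dnorm d r N (\<lambda>\<alpha>. a n \<alpha> - a ?m \<alpha>) / r ^ mdeg d \<alpha>"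
          using N_le_dnorm[OF Dr_diff[OF aD aD] m] by simp
        have t4: "dnorm d r N (\<lambda>\<alpha>. a n \<alpha> - a ?m \<alpha>) / r ^ mdeg d \<alpha> \<le> e / r ^ mdeg d \<alpha>"
          using K n rp by (simp add: divide_right_mono less_imp_le)
        have t5: "N (a ?m \<alpha> - y \<alpha>) < \<delta>" using M by simp
        show ?thesis using t1 t3 t4 t5 unfolding t2 by linarith
      qed
      then have "N (a n \<alpha> - y \<alpha>) \<le> e / r ^ mdeg d \<alpha>" by (rule field_le_epsilon)
      then show ?thesis unfolding tm_def using rp by (simp add: le_divide_eq)
    qed
    then show ?thesis by blast
  qed
  have yD: "y \<in> Dr d r N"
  proof (rule DrI)
    show "\<alpha> \<notin> multi_idx d \<Longrightarrow> y \<alpha> = 0" for \<alpha> unfolding y_def by simp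
    fix e :: real assume e: "e > 0"
    obtain K where K: "\<forall>n\<ge>K. \<forall>\<alpha>\<in>multi_idx d. tm (\<lambda>\<alpha>. a n \<alpha> - y \<alpha>) \<alpha> \<le> e / 2"
      using key[of "e/2"] e by auto
    have "{\<alpha> \<in> multi_idx d. tm y \<alpha> \<ge> e} \<subseteq> {\<alpha> \<in> multi_idx d. tm (a K) \<alpha> \<ge> e}"
    proof (intro subsetI)
      fix \<alpha> assume A: "\<alpha> \<in> {\<alpha> \<in> multi_idx d. tm y \<alpha> \<ge> e}"
      have eq: "(\<lambda>\<alpha>. a K \<alpha> - (a K \<alpha> - y \<alpha>)) = y" by simp
      have "tm y \<alpha> \<le> max (tm (a K) \<alpha>) (tm (\<lambda>\<alpha>. a K \<alpha> - y \<alpha>) \<alpha>)"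
        using tm_diff[of "a K" "\<lambda>\<alpha>. a K \<alpha> - y \<alpha>" \<alpha>] unfolding eq .
      moreover have "tm (\<lambda>\<alpha>. a K \<alpha> - y \<alpha>) \<alpha> \<le> e / 2" using K A by simp
      moreover have "e \<le> tm y \<alpha>" using A by simp
      ultimately have "e \<le> tm (a K) \<alpha>" using e by (simp add: le_max_iff_disj)
      then show "\<alpha> \<in> {\<alpha> \<in> multi_idx d. tm (a K) \<alpha> \<ge> e}" using A by simp
    qed
    then show "finite {\<alpha> \<in> multi_idx d. tm y \<alpha> \<ge> e}"
      using Dr_fin[OF aD e, of K] finite_subset by blast
  qed
  have "(\<lambda>n. dnorm d r N (\<lambda>\<alpha>. a n \<alpha> - y \<alpha>)) \<longlonglongrightarrow> 0"
  proof (rule LIMSEQ_I)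
    fix e :: real assume e: "e > 0"
    obtain K where K: "\<forall>n\<ge>K. \<forall>\<alpha>\<in>multi_idx d. tm (\<lambda>\<alpha>. a n \<alpha> - y \<alpha>) \<alpha> \<le> e / 2"
      using key[of "e/2"] e by auto
    have "norm (dnorm d r N (\<lambda>\<alpha>. a n \<alpha> - y \<alpha>) - 0) < e" if "n \<ge> K" for n
    proof -
      have "dnorm d r N (\<lambda>\<alpha>. a n \<alpha> - y \<alpha>) \<le> e / 2" using K that by (intro dnorm_le) auto
      moreover have "dnorm d r N (\<lambda>\<alpha>. a n \<alpha> - y \<alpha>) \<ge> 0" by (rule dnorm_nonneg[OF Dr_diff[OF aD yD]])
      ultimately show ?thesis using e by simp
    qed
    then show "\<exists>K. \<forall>n\<ge>K. norm (dnorm d r N (\<lambda>\<alpha>. a n \<alpha> - y \<alpha>) - 0) < e" by blast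
  qed
  then show ?thesis using yD by blast
qed

end



locale setting =
  fixes d :: nat and r :: real and NR :: "'r::comm_ring_1 \<Rightarrow> real" and NS :: "'s::comm_ring_1 \<Rightarrow> real"
    and f :: "'r \<Rightarrow> 's"
  assumes nR: "nonarch_norm NR" and nS: "nonarch_norm NS" and rpos: "r > 0"
    and fhom: "bounded_ring_hom NR NS f" and cplS: "norm_complete NS"
begin

sublocale R: nn NR d r using nR rpos by unfold_locales
sublocale S: nn NS d r using nS rpos by unfold_locales

lemma f_add: "f (x + y) = f x + f y" using fhom unfolding bounded_ring_hom_def by blast
lemma f_mult: "f (x * y) = f x * f y" using fhom unfolding bounded_ring_hom_def by blast
lemma f_0[simp]: "f 0 = 0" using f_add[of 0 0] by simp

definition Cf :: real where "Cf = max 1 (SOME C. \<forall>x. NS (f x) \<le> C * NR x)"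
lemma Cf_pos: "Cf > 0" unfolding Cf_def by simp
lemma Cf_bound: "NS (f x) \<le> Cf * NR x"
proof -
  have "\<exists>C. \<forall>x. NS (f x) \<le> C * NR x" using fhom unfolding bounded_ring_hom_def by blast
  then have "NS (f x) \<le> (SOME C. \<forall>x. NS (f x) \<le> C * NR x) * NR x" by (rule someI2_ex) blast
  also have "\<dots> \<le> Cf * NR x" unfolding Cf_def by (rule mult_right_mono) (auto simp: R.N_nonneg)
  finally show ?thesis .
qed

abbreviation rel where "rel \<equiv> tens_rel d r NR f"

lemma rel_zero: "(\<lambda>_. 0) \<in> rel" by (rule tr_zero)
lemma rel_diff: "x \<in> rel \<Longrightarrow> y \<in> rel \<Longrightarrow> (\<lambda>q. x q - y q) \<in> rel" by (rule tr_diff)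
lemma rel_neg: "x \<in> rel \<Longrightarrow> (\<lambda>q. - x q) \<in> rel" using rel_diff[OF rel_zero, of x] by simp
lemma rel_add: "x \<in> rel \<Longrightarrow> y \<in> rel \<Longrightarrow> (\<lambda>q. x q + y q) \<in> rel"
  using rel_diff[of x "\<lambda>q. - y q"] rel_neg[of y] by simp
lemma rel_sum: "finite I \<Longrightarrow> (\<And>i. i \<in> I \<Longrightarrow> F i \<in> rel) \<Longrightarrow> (\<lambda>q. \<Sum>i\<in>I. F i q) \<in> rel"
proof (induction I rule: finite_induct)
  case empty then show ?case using rel_zero by simp
next
  case (insert a I)
  then show ?case using rel_add[of "F a" "\<lambda>q. \<Sum>i\<in>I. F i q"] by simp
qed

definition eqv :: "(((nat \<Rightarrow> nat) \<Rightarrow> 'r) \<times> 's \<Rightarrow> int) \<Rightarrow> (((nat \<Rightarrow> nat) \<Rightarrow> 'r) \<times> 's \<Rightarrow> int) \<Rightarrow> bool"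
  where "eqv a b \<longleftrightarrow> (\<lambda>q. a q - b q) \<in> rel"

lemma eqv_refl: "eqv a a" unfolding eqv_def using rel_zero by simp
lemma eqv_eq: "a = b \<Longrightarrow> eqv a b" using eqv_refl by simp
lemma eqv_sym: "eqv a b \<Longrightarrow> eqv b a" unfolding eqv_def using rel_neg[of "\<lambda>q. a q - b q"] by simp
lemma eqv_trans [trans]: "eqv a b \<Longrightarrow> eqv b c \<Longrightarrow> eqv a c"
  unfolding eqv_def using rel_add[of "\<lambda>q. a q - b q" "\<lambda>q. b q - c q"] by simp
lemma eqv_add: "eqv a a' \<Longrightarrow> eqv b b' \<Longrightarrow> eqv (\<lambda>q. a q + b q) (\<lambda>q. a' q + b' q)"
  unfolding eqv_def using rel_add[of "\<lambda>q. a q - a' q" "\<lambda>q. b q - b' q"] by (simp add: algebra_simps)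
lemma eqv_neg: "eqv a a' \<Longrightarrow> eqv (\<lambda>q. - a q) (\<lambda>q. - a' q)"
  unfolding eqv_def using rel_neg[of "\<lambda>q. a q - a' q"] by (simp add: algebra_simps)
lemma eqv_sum: "finite I \<Longrightarrow> (\<And>i. i \<in> I \<Longrightarrow> eqv (A i) (B i)) \<Longrightarrow>
   eqv (\<lambda>q. \<Sum>i\<in>I. A i q) (\<lambda>q. \<Sum>i\<in>I. B i q)"
  unfolding eqv_def using rel_sum[of I "\<lambda>i q. A i q - B i q"] by (simp add: sum_subtractf)
lemma eqv_rel: "c \<in> rel \<Longrightarrow> eqv c (\<lambda>_. 0)" unfolding eqv_def by simp

lemma teq_eqv: "teq d r NR f xs ys \<longleftrightarrow> eqv (tfree xs) (tfree ys)"
  unfolding teq_def eqv_def ..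

lemma delta_addL: assumes "m1 \<in> Dr d r NR" "m2 \<in> Dr d r NR" shows
   "eqv (tdelta (\<lambda>\<alpha>. m1 \<alpha> + m2 \<alpha>, t)) (\<lambda>q. tdelta (m1, t) q + tdelta (m2, t) q)"
proof -
  have "(\<lambda>q. tdelta (\<lambda>\<alpha>. m1 \<alpha> + m2 \<alpha>, t) q - tdelta (m1, t) q - tdelta (m2, t) q) \<in> rel"
    by (rule tr_addL[OF assms])
  then show ?thesis unfolding eqv_def by (simp add: algebra_simps)
qed
lemma delta_addR: assumes "m \<in> Dr d r NR" shows
   "eqv (tdelta (m, t1 + t2)) (\<lambda>q. tdelta (m, t1) q + tdelta (m, t2) q)"
proof -
  have "(\<lambda>q. tdelta (m, t1 + t2) q - tdelta (m, t1) q - tdelta (m, t2) q) \<in> rel"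
    by (rule tr_addR[OF assms])
  then show ?thesis unfolding eqv_def by (simp add: algebra_simps)
qed
lemma delta_scal: assumes "m \<in> Dr d r NR" shows "eqv (tdelta (\<lambda>\<alpha>. a * m \<alpha>, t)) (tdelta (m, f a * t))"
proof -
  have "(\<lambda>q. tdelta (\<lambda>\<alpha>. a * m \<alpha>, t) q - tdelta (m, f a * t) q) \<in> rel"
    by (rule tr_scal[OF assms])
  then show ?thesis unfolding eqv_def by simp
qed

lemma delta_zeroR: assumes "m \<in> Dr d r NR" shows "eqv (tdelta (m, 0)) (\<lambda>_. 0)"
proof -
  have "(\<lambda>q. tdelta (m, 0 + 0) q - (tdelta (m, 0) q + tdelta (m, 0) q)) \<in> rel"
    using delta_addR[OF assms, of 0 0] unfolding eqv_def .
  then have "(\<lambda>q. - tdelta (m, 0) q) \<in> rel" by simp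
  from rel_neg[OF this] show ?thesis unfolding eqv_def by simp
qed

lemma delta_zeroL: "eqv (tdelta ((\<lambda>_. 0), t)) (\<lambda>_. 0)"
proof -
  have "(\<lambda>q. tdelta (\<lambda>\<alpha>. 0 + 0, t) q - (tdelta (\<lambda>_. 0, t) q + tdelta (\<lambda>_. 0, t) q)) \<in> rel"
    using delta_addL[OF R.Dr_zero R.Dr_zero, of t] unfolding eqv_def by simp
  then have "(\<lambda>q. - tdelta (\<lambda>_. 0, t) q) \<in> rel" by simp
  from rel_neg[OF this] show ?thesis unfolding eqv_def by simp
qed

lemma delta_negR: assumes "m \<in> Dr d r NR" shows "eqv (tdelta (m, - t)) (\<lambda>q. - tdelta (m, t) q)"
proof -
  have A: "eqv (tdelta (m, t + - t)) (\<lambda>q. tdelta (m, t) q + tdelta (m, - t) q)"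
    by (rule delta_addR[OF assms])
  have A': "eqv (tdelta (m, 0)) (\<lambda>q. tdelta (m, t) q + tdelta (m, - t) q)"
    using A by simp
  have "eqv (\<lambda>q. tdelta (m, t) q + tdelta (m, - t) q) (\<lambda>_. 0)"
    by (rule eqv_trans[OF eqv_sym[OF A'] delta_zeroR[OF assms]])
  then have "eqv (\<lambda>q. - tdelta (m, t) q + (tdelta (m, t) q + tdelta (m, - t) q))
      (\<lambda>q. - tdelta (m, t) q + 0)"
    by (intro eqv_add eqv_refl)
  then show ?thesis by simp
qed

lemma Dr_sumR: "finite F \<Longrightarrow> (\<And>a. a \<in> F \<Longrightarrow> M a \<in> Dr d r NR) \<Longrightarrow> (\<lambda>\<beta>. \<Sum>a\<in>F. M a \<beta>) \<in> Dr d r NR"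
proof (induction F rule: finite_induct)
  case empty then show ?case using R.Dr_zero by simp
next
  case (insert a F) then show ?case using R.Dr_add[of "M a" "\<lambda>\<beta>. \<Sum>a\<in>F. M a \<beta>"] by simp
qed

lemma delta_sumL: "finite F \<Longrightarrow> (\<And>a. a \<in> F \<Longrightarrow> M a \<in> Dr d r NR) \<Longrightarrow>
   eqv (tdelta (\<lambda>\<beta>. \<Sum>a\<in>F. M a \<beta>, t)) (\<lambda>q. \<Sum>a\<in>F. tdelta (M a, t) q)"
proof (induction F rule: finite_induct)
  case empty then show ?case using delta_zeroL by simp
next
  case (insert a F)
  have "eqv (tdelta (\<lambda>\<beta>. M a \<beta> + (\<Sum>a\<in>F. M a \<beta>), t))
      (\<lambda>q. tdelta (M a, t) q + tdelta (\<lambda>\<beta>. \<Sum>a\<in>F. M a \<beta>, t) q)"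
    using insert by (intro delta_addL Dr_sumR) auto
  also have "eqv \<dots> (\<lambda>q. tdelta (M a, t) q + (\<Sum>a\<in>F. tdelta (M a, t) q))"
    using insert by (intro eqv_add eqv_refl) auto
  finally show ?case using insert by simp
qed

lemma delta_sumR: assumes "m \<in> Dr d r NR" shows "finite I \<Longrightarrow>
   eqv (tdelta (m, \<Sum>i\<in>I. s i)) (\<lambda>q. \<Sum>i\<in>I. tdelta (m, s i) q)"
proof (induction I rule: finite_induct)
  case empty then show ?case using delta_zeroR[OF assms] by simp
next
  case (insert a I)
  have "eqv (tdelta (m, s a + (\<Sum>i\<in>I. s i)))
      (\<lambda>q. tdelta (m, s a) q + tdelta (m, \<Sum>i\<in>I. s i) q)"
    using assms by (rule delta_addR)
  also have "eqv \<dots> (\<lambda>q. tdelta (m, s a) q + (\<Sum>i\<in>I. tdelta (m, s i) q))"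
    using insert by (intro eqv_add eqv_refl) auto
  finally show ?case using insert by simp
qed

end



context setting begin

lemma tfree_Nil: "tfree [] q = 0" unfolding tfree_def by simp
lemma tfree_Cons: "tfree (x # xs) q = tdelta x q + tfree xs q"
  unfolding tfree_def tdelta_def by auto
lemma tfree_append: "tfree (xs @ ys) q = tfree xs q + tfree ys q"
  unfolding tfree_def by simp
lemma tfree_sum: "tfree xs q = (\<Sum>i<length xs. tdelta (xs ! i) q)"
proof (induction xs)
  case Nil then show ?case by (simp add: tfree_Nil)
next
  case (Cons x xs)
  have "(\<Sum>i<Suc (length xs). tdelta ((x#xs)!i) q) = tdelta x q + (\<Sum>i<length xs. tdelta (xs!i) q)"
    by (subst sum.lessThan_Suc_shift) simp
  then show ?case using Cons by (simp add: tfree_Cons)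
qed
lemma tfree_map_distinct: "distinct L \<Longrightarrow> tfree (map h L) q = (\<Sum>a\<in>set L. tdelta (h a) q)"
proof (induction L)
  case Nil then show ?case by (simp add: tfree_Nil)
next
  case (Cons x xs) then show ?case by (simp add: tfree_Cons)
qed

lemma tlists_Cons: "(m, t) # xs \<in> tlists d r NR \<longleftrightarrow> m \<in> Dr d r NR \<and> xs \<in> tlists d r NR"
  unfolding tlists_def by auto
lemma tlists_append: "xs @ ys \<in> tlists d r NR \<longleftrightarrow> xs \<in> tlists d r NR \<and> ys \<in> tlists d r NR"
  unfolding tlists_def by auto
lemma tlists_tneg: "xs \<in> tlists d r NR \<Longrightarrow> tneg xs \<in> tlists d r NR"
  unfolding tlists_def tneg_def by auto
lemma tlists_tscale: "xs \<in> tlists d r NR \<Longrightarrow> tscale s xs \<in> tlists d r NR"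
  unfolding tlists_def tscale_def by auto
lemma tlists_tdiff: "xs \<in> tlists d r NR \<Longrightarrow> ys \<in> tlists d r NR \<Longrightarrow> tdiff xs ys \<in> tlists d r NR"
  unfolding tdiff_def using tlists_append tlists_tneg by blast

lemma tfree_tneg: "xs \<in> tlists d r NR \<Longrightarrow> eqv (tfree (tneg xs)) (\<lambda>q. - tfree xs q)"
proof (induction xs)
  case Nil then show ?case by (simp add: tneg_def tfree_Nil eqv_refl)
next
  case (Cons x xs)
  obtain m t where x: "x = (m, t)" by fastforce
  have m: "m \<in> Dr d r NR" and xs: "xs \<in> tlists d r NR" using Cons.prems unfolding x tlists_Cons by auto
  have e1: "tfree (tneg (x # xs)) = (\<lambda>q. tdelta (m, - t) q + tfree (tneg xs) q)"
    by (rule ext) (simp add: x tneg_def tfree_Cons)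
  have e2: "eqv (\<lambda>q. tdelta (m, - t) q + tfree (tneg xs) q) (\<lambda>q. - tdelta (m, t) q + - tfree xs q)"
    by (rule eqv_add[OF delta_negR[OF m] Cons.IH[OF xs]])
  have e3: "(\<lambda>q. - tdelta (m, t) q + - tfree xs q) = (\<lambda>q. - tfree (x # xs) q)"
    by (rule ext) (simp add: x tfree_Cons)
  show ?case using e2 unfolding e1 e3 .
qed

definition gq :: "(nat \<Rightarrow> nat) \<Rightarrow> ((nat \<Rightarrow> nat) \<Rightarrow> 'r) \<times> 's \<Rightarrow> 's" where
  "gq \<alpha> = (\<lambda>(m, t). f (m \<alpha>) * t)"

lemma delta_g: "of_int (tdelta a q) * gq \<alpha> q = (if q = a then gq \<alpha> q else 0)"
  unfolding tdelta_def by simp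

lemma sum_delta3: assumes "finite X" "a \<in> X" "b \<in> X" "c \<in> X"
  shows "(\<Sum>q\<in>X. of_int (tdelta a q - tdelta b q - tdelta c q) * gq \<alpha> q) = gq \<alpha> a - gq \<alpha> b - gq \<alpha> c"
proof -
  have "(\<Sum>q\<in>X. of_int (tdelta a q - tdelta b q - tdelta c q) * gq \<alpha> q)
     = (\<Sum>q\<in>X. of_int (tdelta a q) * gq \<alpha> q) - (\<Sum>q\<in>X. of_int (tdelta b q) * gq \<alpha> q)
       - (\<Sum>q\<in>X. of_int (tdelta c q) * gq \<alpha> q)"
    by (simp add: of_int_diff left_diff_distrib sum_subtractf)
  also have "\<dots> = gq \<alpha> a - gq \<alpha> b - gq \<alpha> c" unfolding delta_g using assms by simp
  finally show ?thesis .
qed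

definition good :: "(((nat \<Rightarrow> nat) \<Rightarrow> 'r) \<times> 's \<Rightarrow> int) \<Rightarrow> bool" where
  "good c \<longleftrightarrow> (\<exists>F. finite F \<and> (\<forall>q. q \<notin> F \<longrightarrow> c q = 0)) \<and>
     (\<forall>A \<alpha>. finite A \<and> (\<forall>q. q \<notin> A \<longrightarrow> c q = 0) \<longrightarrow> (\<Sum>q\<in>A. of_int (c q) * gq \<alpha> q) = 0)"

lemma sum_extend: assumes "finite A" "finite B" "\<forall>q. q \<notin> A \<longrightarrow> c q = 0"
  shows "(\<Sum>q\<in>A. of_int (c q) * (g q :: 's)) = (\<Sum>q\<in>A \<union> B. of_int (c q) * g q)"
  by (rule sum.mono_neutral_left) (use assms in auto)

lemma good_gen: assumes "\<And>\<alpha>. gq \<alpha> a - gq \<alpha> b - gq \<alpha> c = 0"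
  shows "good (\<lambda>q. tdelta a q - tdelta b q - tdelta c q)"
  unfolding good_def
proof safe
  show "\<exists>F. finite F \<and> (\<forall>q. q \<notin> F \<longrightarrow> tdelta a q - tdelta b q - tdelta c q = 0)"
    by (rule exI[of _ "{a, b, c}"]) (simp add: tdelta_def)
  fix A \<alpha> assume A: "finite A" "\<forall>q. q \<notin> A \<longrightarrow> tdelta a q - tdelta b q - tdelta c q = 0"
  have "(\<Sum>q\<in>A. of_int (tdelta a q - tdelta b q - tdelta c q) * gq \<alpha> q)
     = (\<Sum>q\<in>A \<union> {a, b, c}. of_int (tdelta a q - tdelta b q - tdelta c q) * gq \<alpha> q)"
    by (rule sum_extend) (use A in auto)
  also have "\<dots> = gq \<alpha> a - gq \<alpha> b - gq \<alpha> c" by (rule sum_delta3) (use A in auto)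
  finally show "(\<Sum>q\<in>A. of_int (tdelta a q - tdelta b q - tdelta c q) * gq \<alpha> q) = 0"
    using assms by simp
qed


lemma good_gen2: assumes "\<And>\<alpha>. gq \<alpha> a - gq \<alpha> b = 0"
  shows "good (\<lambda>q. tdelta a q - tdelta b q)"
  unfolding good_def
proof safe
  show "\<exists>F. finite F \<and> (\<forall>q. q \<notin> F \<longrightarrow> tdelta a q - tdelta b q = 0)"
    by (rule exI[of _ "{a, b}"]) (simp add: tdelta_def)
  fix A \<alpha> assume A: "finite A" "\<forall>q. q \<notin> A \<longrightarrow> tdelta a q - tdelta b q = 0"
  have "(\<Sum>q\<in>A. of_int (tdelta a q - tdelta b q) * gq \<alpha> q)
     = (\<Sum>q\<in>A \<union> {a, b}. of_int (tdelta a q - tdelta b q) * gq \<alpha> q)"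
    by (rule sum_extend) (use A in auto)
  also have "\<dots> = (\<Sum>q\<in>A \<union> {a, b}. of_int (tdelta a q) * gq \<alpha> q) - (\<Sum>q\<in>A \<union> {a, b}. of_int (tdelta b q) * gq \<alpha> q)"
    by (simp add: of_int_diff left_diff_distrib sum_subtractf)
  also have "\<dots> = gq \<alpha> a - gq \<alpha> b" unfolding delta_g using A by simp
  finally show "(\<Sum>q\<in>A. of_int (tdelta a q - tdelta b q) * gq \<alpha> q) = 0"
    using assms by simp
qed

lemma rel_good: "c \<in> rel \<Longrightarrow> good c"
proof (induction rule: tens_rel.induct)
  case tr_zero then show ?case unfolding good_def by auto
next
  case (tr_diff x y)
  from tr_diff.IH(1) obtain Fx where Fx: "finite Fx" "\<forall>q. q \<notin> Fx \<longrightarrow> x q = 0" unfolding good_def by blast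
  from tr_diff.IH(2) obtain Fy where Fy: "finite Fy" "\<forall>q. q \<notin> Fy \<longrightarrow> y q = 0" unfolding good_def by blast
  show ?case unfolding good_def
  proof safe
    show "\<exists>F. finite F \<and> (\<forall>q. q \<notin> F \<longrightarrow> x q - y q = 0)"
      by (rule exI[of _ "Fx \<union> Fy"]) (use Fx Fy in auto)
    fix A \<alpha> assume A: "finite A" "\<forall>q. q \<notin> A \<longrightarrow> x q - y q = 0"
    let ?B = "A \<union> (Fx \<union> Fy)"
    have fB: "finite ?B" using A Fx Fy by simp
    have gx: "\<And>A \<alpha>. finite A \<Longrightarrow> (\<forall>q. q \<notin> A \<longrightarrow> x q = 0) \<Longrightarrow> (\<Sum>q\<in>A. of_int (x q) * gq \<alpha> q) = 0"
      using tr_diff.IH(1) unfolding good_def by blast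
    have gy: "\<And>A \<alpha>. finite A \<Longrightarrow> (\<forall>q. q \<notin> A \<longrightarrow> y q = 0) \<Longrightarrow> (\<Sum>q\<in>A. of_int (y q) * gq \<alpha> q) = 0"
      using tr_diff.IH(2) unfolding good_def by blast
    have zx: "\<forall>q. q \<notin> ?B \<longrightarrow> x q = 0" using Fx by simp
    have zy: "\<forall>q. q \<notin> ?B \<longrightarrow> y q = 0" using Fy by simp
    have "(\<Sum>q\<in>A. of_int (x q - y q) * gq \<alpha> q) = (\<Sum>q\<in>?B. of_int (x q - y q) * gq \<alpha> q)"
      by (rule sum_extend) (use A Fx Fy in auto)
    also have "\<dots> = (\<Sum>q\<in>?B. of_int (x q) * gq \<alpha> q) - (\<Sum>q\<in>?B. of_int (y q) * gq \<alpha> q)"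
      by (simp add: of_int_diff left_diff_distrib sum_subtractf)
    also have "(\<Sum>q\<in>?B. of_int (x q) * gq \<alpha> q) = 0" by (rule gx[OF fB zx])
    also have "(\<Sum>q\<in>?B. of_int (y q) * gq \<alpha> q) = 0" by (rule gy[OF fB zy])
    finally show "(\<Sum>q\<in>A. of_int (x q - y q) * gq \<alpha> q) = 0" by simp
  qed
next
  case (tr_addL m1 m2 t)
  show ?case by (rule good_gen) (simp add: gq_def f_add algebra_simps)
next
  case (tr_addR m t1 t2)
  show ?case by (rule good_gen) (simp add: gq_def algebra_simps)
next
  case (tr_scal m a t)
  show ?case by (rule good_gen2) (simp add: gq_def f_mult algebra_simps)
qed

end



context setting begin

lemma tphi_gq: "tphi f xs \<alpha> = sum_list (map (gq \<alpha>) xs)"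
  unfolding tphi_def gq_def by simp

lemma sum_list_count: "finite A \<Longrightarrow> set xs \<subseteq> A \<Longrightarrow>
  sum_list (map g xs) = (\<Sum>q\<in>A. of_nat (count_list xs q) * (g q :: 's))"
proof (induction xs)
  case Nil then show ?case by simp
next
  case (Cons x xs)
  have "(\<Sum>q\<in>A. of_nat (count_list (x # xs) q) * g q)
      = (\<Sum>q\<in>A. of_nat (count_list xs q) * g q) + (\<Sum>q\<in>A. (if x = q then g q else 0))"
    by (simp add: sum.distrib[symmetric] distrib_right) (rule sum.cong, auto simp: distrib_right)
  also have "(\<Sum>q\<in>A. (if x = q then g q else 0)) = g x" using Cons.prems by simp
  finally show ?case using Cons by simp
qed

lemma tphi_teq: assumes "teq d r NR f xs ys" shows "tphi f xs = tphi f ys"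
proof (rule ext)
  fix \<alpha>
  let ?c = "\<lambda>q. tfree xs q - tfree ys q"
  have "?c \<in> rel" using assms unfolding teq_def .
  then have gd: "good ?c" by (rule rel_good)
  let ?A = "set xs \<union> set ys"
  have fA: "finite ?A" by simp
  have z: "\<forall>q. q \<notin> ?A \<longrightarrow> ?c q = 0" by (simp add: tfree_def count_list_0_iff)
  have "(\<Sum>q\<in>?A. of_int (?c q) * gq \<alpha> q) = 0" using gd fA z unfolding good_def by blast
  moreover have "(\<Sum>q\<in>?A. of_int (?c q) * gq \<alpha> q)
     = (\<Sum>q\<in>?A. of_nat (count_list xs q) * gq \<alpha> q) - (\<Sum>q\<in>?A. of_nat (count_list ys q) * gq \<alpha> q)"
    by (simp add: tfree_def of_int_diff left_diff_distrib sum_subtractf)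
  moreover have "(\<Sum>q\<in>?A. of_nat (count_list xs q) * gq \<alpha> q) = tphi f xs \<alpha>"
    unfolding tphi_gq by (rule sum_list_count[symmetric]) auto
  moreover have "(\<Sum>q\<in>?A. of_nat (count_list ys q) * gq \<alpha> q) = tphi f ys \<alpha>"
    unfolding tphi_gq by (rule sum_list_count[symmetric]) auto
  ultimately show "tphi f xs \<alpha> = tphi f ys \<alpha>" by simp
qed

lemma tm_map: "S.tm (\<lambda>\<alpha>. f (m \<alpha>) * t) \<alpha> \<le> (Cf * NS t) * R.tm m \<alpha>"
proof -
  have "NS (f (m \<alpha>) * t) \<le> NS (f (m \<alpha>)) * NS t" by (rule S.N_mult)
  also have "\<dots> \<le> (Cf * NR (m \<alpha>)) * NS t" by (rule mult_right_mono[OF Cf_bound S.N_nonneg])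
  finally have "NS (f (m \<alpha>) * t) * r ^ mdeg d \<alpha> \<le> (Cf * NR (m \<alpha>)) * NS t * r ^ mdeg d \<alpha>"
    using rpos by (simp add: mult_right_mono)
  then show ?thesis unfolding S.tm_def R.tm_def by (simp add: algebra_simps)
qed

lemma Dr_map: assumes m: "m \<in> Dr d r NR" shows "(\<lambda>\<alpha>. f (m \<alpha>) * t) \<in> Dr d r NS"
proof (rule S.DrI)
  show "\<alpha> \<notin> multi_idx d \<Longrightarrow> f (m \<alpha>) * t = 0" for \<alpha> using R.Dr_out[OF m] by simp
  fix e :: real assume e: "e > 0"
  let ?K = "Cf * NS t"
  show "finite {\<alpha> \<in> multi_idx d. S.tm (\<lambda>\<alpha>. f (m \<alpha>) * t) \<alpha> \<ge> e}"
  proof (cases "?K = 0")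
    case True
    have "S.tm (\<lambda>\<alpha>. f (m \<alpha>) * t) \<alpha> < e" for \<alpha> using tm_map[of m t \<alpha>] True e by simp
    then have E: "{\<alpha> \<in> multi_idx d. S.tm (\<lambda>\<alpha>. f (m \<alpha>) * t) \<alpha> \<ge> e} = {}" by (simp add: not_le)
    show ?thesis unfolding E by simp
  next
    case False
    then have sp: "?K > 0" using S.N_nonneg[of t] Cf_pos by simp
    have "{\<alpha> \<in> multi_idx d. S.tm (\<lambda>\<alpha>. f (m \<alpha>) * t) \<alpha> \<ge> e} \<subseteq> {\<alpha> \<in> multi_idx d. R.tm m \<alpha> \<ge> e / ?K}"
    proof (intro subsetI)
      fix \<alpha> assume A: "\<alpha> \<in> {\<alpha> \<in> multi_idx d. S.tm (\<lambda>\<alpha>. f (m \<alpha>) * t) \<alpha> \<ge> e}"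
      then have "e \<le> ?K * R.tm m \<alpha>" using tm_map[of m t \<alpha>] by simp
      then have "e / ?K \<le> R.tm m \<alpha>" using sp by (simp add: divide_le_eq mult.commute)
      then show "\<alpha> \<in> {\<alpha> \<in> multi_idx d. R.tm m \<alpha> \<ge> e / ?K}" using A by simp
    qed
    moreover have "finite {\<alpha> \<in> multi_idx d. R.tm m \<alpha> \<ge> e / ?K}" using R.Dr_fin[OF m] e sp by simp
    ultimately show ?thesis by (rule finite_subset)
  qed
qed

lemma dnorm_map: assumes m: "m \<in> Dr d r NR"
  shows "dnorm d r NS (\<lambda>\<alpha>. f (m \<alpha>) * t) \<le> Cf * (dnorm d r NR m * NS t)"
proof (rule S.dnorm_le)
  fix \<alpha> assume a: "\<alpha> \<in> multi_idx d"
  have "(Cf * NS t) * R.tm m \<alpha> \<le> (Cf * NS t) * dnorm d r NR m"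
    using R.dnorm_ge[OF m a] Cf_pos S.N_nonneg[of t] by (intro mult_left_mono) auto
  then show "S.tm (\<lambda>\<alpha>. f (m \<alpha>) * t) \<alpha> \<le> Cf * (dnorm d r NR m * NS t)"
    using tm_map[of m t \<alpha>] by (simp add: algebra_simps)
qed

abbreviation cst :: "((nat \<Rightarrow> nat) \<Rightarrow> 'r) \<times> 's \<Rightarrow> real" where
  "cst \<equiv> (\<lambda>(m, t). dnorm d r NR m * NS t)"

lemma tcost_Nil: "tcost d r NR NS [] = 0" unfolding tcost_def by simp
lemma tcost_Cons: "tcost d r NR NS (x # xs) = max (cst x) (tcost d r NR NS xs)"
proof -
  have "insert 0 (cst ` set (x # xs)) = insert (cst x) (insert 0 (cst ` set xs))" by auto
  then show ?thesis unfolding tcost_def by (simp add: Max_insert)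
qed
lemma tcost_nonneg: "tcost d r NR NS xs \<ge> 0" unfolding tcost_def by (rule Max_ge) auto
lemma tcost_append: "tcost d r NR NS (xs @ ys) = max (tcost d r NR NS xs) (tcost d r NR NS ys)"
proof (induction xs)
  case Nil then show ?case using tcost_nonneg[of ys] by (simp add: tcost_Nil)
next
  case (Cons x xs) then show ?case by (simp add: tcost_Cons max.assoc)
qed
lemma tcost_le: "(\<And>x. x \<in> set xs \<Longrightarrow> cst x \<le> B) \<Longrightarrow> 0 \<le> B \<Longrightarrow> tcost d r NR NS xs \<le> B"
  unfolding tcost_def by (rule Max.boundedI) auto
lemma tcost_tneg: "tcost d r NR NS (tneg xs) = tcost d r NR NS xs"
proof (induction xs)
  case Nil then show ?case by (simp add: tneg_def)
next
  case (Cons x xs)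
  obtain m t where x: "x = (m, t)" by fastforce
  have "tneg (x # xs) = (m, - t) # tneg xs" by (simp add: x tneg_def)
  then show ?case using Cons by (simp add: tcost_Cons x S.N_neg)
qed

lemma tphi_Nil: "tphi f [] = (\<lambda>_. 0)" unfolding tphi_def by simp
lemma tphi_Cons: "tphi f ((m, t) # xs) = (\<lambda>\<alpha>. f (m \<alpha>) * t + tphi f xs \<alpha>)"
  unfolding tphi_def by simp

lemma tphi_Dr: "xs \<in> tlists d r NR \<Longrightarrow> tphi f xs \<in> Dr d r NS \<and> dnorm d r NS (tphi f xs) \<le> Cf * tcost d r NR NS xs"
proof (induction xs)
  case Nil
  have "dnorm d r NS (\<lambda>_. 0) \<le> 0" by (rule S.dnorm_le) (simp add: S.tm_def)
  then show ?case using S.Dr_zero by (simp add: tphi_Nil tcost_Nil)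
next
  case (Cons x xs)
  obtain m t where x: "x = (m, t)" by fastforce
  have m: "m \<in> Dr d r NR" and xs: "xs \<in> tlists d r NR" using Cons.prems unfolding x tlists_Cons by auto
  note IH = Cons.IH[OF xs]
  have D: "tphi f (x # xs) \<in> Dr d r NS" unfolding x tphi_Cons
    by (rule S.Dr_add[OF Dr_map[OF m] conjunct1[OF IH]])
  have "dnorm d r NS (tphi f (x # xs)) \<le> max (dnorm d r NS (\<lambda>\<alpha>. f (m \<alpha>) * t)) (dnorm d r NS (tphi f xs))"
    unfolding x tphi_Cons by (rule S.dnorm_add[OF Dr_map[OF m] conjunct1[OF IH]])
  also have "\<dots> \<le> max (Cf * (dnorm d r NR m * NS t)) (Cf * tcost d r NR NS xs)"
    by (rule max.mono[OF dnorm_map[OF m] conjunct2[OF IH]])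
  also have "\<dots> = Cf * tcost d r NR NS (x # xs)"
    unfolding x tcost_Cons using Cf_pos by (simp add: max_mult_distrib_left)
  finally show ?case using D by simp
qed

end



context setting begin

abbreviation "TL \<equiv> tlists d r NR"
abbreviation "tn \<equiv> tnorm d r NR NS f"
abbreviation "tc \<equiv> tcost d r NR NS"

lemma eqv_trans_eq1 [trans]: "a = b \<Longrightarrow> eqv b c \<Longrightarrow> eqv a c" by simp
lemma eqv_trans_eq2 [trans]: "eqv a b \<Longrightarrow> b = c \<Longrightarrow> eqv a c" by simp

lemma teq_refl: "teq d r NR f xs xs" unfolding teq_eqv by (rule eqv_refl)

lemma tnorm_le: "ys \<in> TL \<Longrightarrow> teq d r NR f ys xs \<Longrightarrow> tn xs \<le> tc ys"
  unfolding tnorm_def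
  by (rule cInf_lower) (auto intro!: bdd_belowI[of _ 0] simp: tcost_nonneg)

lemma tnorm_ge: "xs \<in> TL \<Longrightarrow> (\<And>ys. ys \<in> TL \<Longrightarrow> teq d r NR f ys xs \<Longrightarrow> B \<le> tc ys) \<Longrightarrow> B \<le> tn xs"
  unfolding tnorm_def
  by (rule cInf_greatest) (auto intro: teq_refl)

lemma tnorm_nonneg: "xs \<in> TL \<Longrightarrow> 0 \<le> tn xs"
  by (rule tnorm_ge) (auto simp: tcost_nonneg)

lemma tnorm_approx: assumes "xs \<in> TL" "\<delta> > 0"
  shows "\<exists>ys. ys \<in> TL \<and> teq d r NR f ys xs \<and> tc ys < tn xs + \<delta>"
proof -
  let ?X = "tc ` {ys \<in> TL. teq d r NR f ys xs}"
  have ne: "?X \<noteq> {}" using assms(1) teq_refl by blast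
  have bd: "bdd_below ?X" by (auto intro!: bdd_belowI[of _ 0] simp: tcost_nonneg)
  have "Inf ?X < tn xs + \<delta>" using assms(2) unfolding tnorm_def by simp
  then obtain x where "x \<in> ?X" "x < tn xs + \<delta>" using cInf_less_iff[OF ne bd] by blast
  then show ?thesis by blast
qed

lemma tnorm_cong: assumes "eqv (tfree xs) (tfree xs')"
  shows "tn xs = tn xs'"
proof -
  have "teq d r NR f ys xs \<longleftrightarrow> teq d r NR f ys xs'" for ys
  proof
    assume "teq d r NR f ys xs" then show "teq d r NR f ys xs'"
      unfolding teq_eqv using assms by (rule eqv_trans)
  next
    assume "teq d r NR f ys xs'" then show "teq d r NR f ys xs"
      unfolding teq_eqv using eqv_sym[OF assms] by (rule eqv_trans)
  qed
  then show ?thesis unfolding tnorm_def by simp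
qed

lemma lower_bound: assumes xs: "xs \<in> TL" shows "dnorm d r NS (tphi f xs) \<le> Cf * tn xs"
proof -
  have "dnorm d r NS (tphi f xs) / Cf \<le> tn xs"
  proof (rule tnorm_ge[OF xs])
    fix ys assume ys: "ys \<in> TL" "teq d r NR f ys xs"
    have "dnorm d r NS (tphi f xs) = dnorm d r NS (tphi f ys)" using tphi_teq[OF ys(2)] by simp
    also have "\<dots> \<le> Cf * tc ys" using tphi_Dr[OF ys(1)] by simp
    finally show "dnorm d r NS (tphi f xs) / Cf \<le> tc ys" using Cf_pos by (simp add: divide_le_eq mult.commute)
  qed
  then show ?thesis using Cf_pos by (simp add: divide_le_eq mult.commute)
qed

lemma tnorm_append: assumes a: "a \<in> TL" and b: "b \<in> TL" shows "tn (a @ b) \<le> tn a + tn b"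
proof (rule field_le_epsilon)
  fix \<delta> :: real assume dp: "\<delta> > 0"
  obtain ya where ya: "ya \<in> TL" "teq d r NR f ya a" "tc ya < tn a + \<delta> / 2"
    using tnorm_approx[OF a, of "\<delta>/2"] dp by auto
  obtain yb where yb: "yb \<in> TL" "teq d r NR f yb b" "tc yb < tn b + \<delta> / 2"
    using tnorm_approx[OF b, of "\<delta>/2"] dp by auto
  have "teq d r NR f (ya @ yb) (a @ b)"
    using eqv_add[OF ya(2)[unfolded teq_eqv] yb(2)[unfolded teq_eqv]]
    unfolding teq_eqv tfree_append[abs_def] .
  moreover have "ya @ yb \<in> TL" using ya yb tlists_append by blast
  ultimately have "tn (a @ b) \<le> tc (ya @ yb)" by (rule tnorm_le[rotated])
  also have "\<dots> = max (tc ya) (tc yb)" by (rule tcost_append)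
  also have "\<dots> \<le> tc ya + tc yb" using tcost_nonneg[of ya] tcost_nonneg[of yb] by simp
  finally show "tn (a @ b) \<le> tn a + tn b + \<delta>" using ya yb by simp
qed

lemma tnorm_tneg: assumes a: "a \<in> TL" shows "tn (tneg a) \<le> tn a"
proof (rule field_le_epsilon)
  fix \<delta> :: real assume dp: "\<delta> > 0"
  obtain ya where ya: "ya \<in> TL" "teq d r NR f ya a" "tc ya < tn a + \<delta>"
    using tnorm_approx[OF a dp] by auto
  have "eqv (tfree (tneg ya)) (\<lambda>q. - tfree ya q)" by (rule tfree_tneg[OF ya(1)])
  also have "eqv \<dots> (\<lambda>q. - tfree a q)" by (rule eqv_neg[OF ya(2)[unfolded teq_eqv]])
  also have "eqv \<dots> (tfree (tneg a))" by (rule eqv_sym[OF tfree_tneg[OF a]])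
  finally have "teq d r NR f (tneg ya) (tneg a)" unfolding teq_eqv .
  then have "tn (tneg a) \<le> tc (tneg ya)" using tlists_tneg[OF ya(1)] by (intro tnorm_le)
  then show "tn (tneg a) \<le> tn a + \<delta>" using ya tcost_tneg[of ya] by simp
qed

lemma tnorm_tri: assumes a: "a \<in> TL" and b: "b \<in> TL"
  shows "\<bar>tn a - tn b\<bar> \<le> tn (tdiff a b)"
proof -
  have nb: "tneg b \<in> TL" using tlists_tneg[OF b] .
  have dab: "tdiff a b \<in> TL" using tlists_tdiff[OF a b] .
  have e1: "eqv (tfree (b @ tdiff a b)) (tfree a)"
  proof -
    have "tfree (b @ tdiff a b) = (\<lambda>q. tfree b q + (tfree a q + tfree (tneg b) q))"
      by (rule ext) (simp add: tdiff_def tfree_append)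
    also have "eqv \<dots> (\<lambda>q. tfree b q + (tfree a q + - tfree b q))"
      by (intro eqv_add eqv_refl tfree_tneg[OF b])
    also have "(\<lambda>q. tfree b q + (tfree a q + - tfree b q)) = tfree a" by simp
    finally show ?thesis .
  qed
  have e2: "eqv (tfree (a @ tneg (tdiff a b))) (tfree b)"
  proof -
    have "tfree (a @ tneg (tdiff a b)) = (\<lambda>q. tfree a q + tfree (tneg (tdiff a b)) q)"
      by (rule ext) (simp add: tfree_append)
    also have "eqv \<dots> (\<lambda>q. tfree a q + - tfree (tdiff a b) q)"
      by (intro eqv_add eqv_refl tfree_tneg[OF dab])
    also have "(\<lambda>q. tfree a q + - tfree (tdiff a b) q) = (\<lambda>q. tfree a q + - (tfree a q + tfree (tneg b) q))"
      by (rule ext) (simp add: tdiff_def tfree_append)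
    also have "eqv \<dots> (\<lambda>q. tfree a q + - (tfree a q + - tfree b q))"
      by (intro eqv_add eqv_refl eqv_neg tfree_tneg[OF b])
    also have "(\<lambda>q. tfree a q + - (tfree a q + - tfree b q)) = tfree b" by simp
    finally show ?thesis .
  qed
  have "tn a = tn (b @ tdiff a b)" using tnorm_cong[OF eqv_sym[OF e1]] .
  also have "\<dots> \<le> tn b + tn (tdiff a b)" by (rule tnorm_append[OF b dab])
  finally have i1: "tn a \<le> tn b + tn (tdiff a b)" .
  have "tn b = tn (a @ tneg (tdiff a b))" using tnorm_cong[OF eqv_sym[OF e2]] .
  also have "\<dots> \<le> tn a + tn (tneg (tdiff a b))" by (rule tnorm_append[OF a tlists_tneg[OF dab]])
  also have "\<dots> \<le> tn a + tn (tdiff a b)" using tnorm_tneg[OF dab] by simp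
  finally have i2: "tn b \<le> tn a + tn (tdiff a b)" .
  show ?thesis using i1 i2 by linarith
qed

end



context setting begin

lemma Dr_restrict: assumes m: "m \<in> Dr d r NR" shows "(\<lambda>\<beta>. if P \<beta> then m \<beta> else 0) \<in> Dr d r NR"
proof (rule R.DrI)
  show "\<alpha> \<notin> multi_idx d \<Longrightarrow> (if P \<alpha> then m \<alpha> else 0) = 0" for \<alpha> using R.Dr_out[OF m] by simp
  fix e :: real assume e: "e > 0"
  have "{\<alpha> \<in> multi_idx d. R.tm (\<lambda>\<beta>. if P \<beta> then m \<beta> else 0) \<alpha> \<ge> e} \<subseteq> {\<alpha> \<in> multi_idx d. R.tm m \<alpha> \<ge> e}"
    using e by (auto simp: R.tm_def split: if_splits)
  then show "finite {\<alpha> \<in> multi_idx d. R.tm (\<lambda>\<beta>. if P \<beta> then m \<beta> else 0) \<alpha> \<ge> e}"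
    using R.Dr_fin[OF m e] finite_subset by blast
qed

definition ev :: "(nat \<Rightarrow> nat) \<Rightarrow> (nat \<Rightarrow> nat) \<Rightarrow> 'r" where
  "ev \<alpha> = (\<lambda>\<beta>. if \<beta> = \<alpha> then 1 else 0)"

lemma ev_Dr: assumes a: "\<alpha> \<in> multi_idx d" shows "ev \<alpha> \<in> Dr d r NR"
proof (rule R.DrI)
  show "\<beta> \<notin> multi_idx d \<Longrightarrow> ev \<alpha> \<beta> = 0" for \<beta> using a unfolding ev_def by auto
  fix e :: real assume e: "e > 0"
  have "{\<beta> \<in> multi_idx d. R.tm (ev \<alpha>) \<beta> \<ge> e} \<subseteq> {\<alpha>}"
    using e by (auto simp: R.tm_def ev_def split: if_splits)
  then show "finite {\<beta> \<in> multi_idx d. R.tm (ev \<alpha>) \<beta> \<ge> e}" using finite_subset by blast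
qed

lemma ev_dnorm: "dnorm d r NR (ev \<alpha>) \<le> NR 1 * r ^ mdeg d \<alpha>"
proof (rule R.dnorm_le)
  fix \<beta> show "R.tm (ev \<alpha>) \<beta> \<le> NR 1 * r ^ mdeg d \<alpha>"
    using R.N_nonneg[of 1] R.rpow_pos[of "mdeg d \<alpha>"] by (auto simp: R.tm_def ev_def)
qed

lemma tphi_nth: "tphi f xs \<alpha> = (\<Sum>i<length xs. f (fst (xs ! i) \<alpha>) * snd (xs ! i))"
proof -
  have "tphi f xs \<alpha> = sum_list (map (gq \<alpha>) xs)" by (rule tphi_gq)
  also have "\<dots> = (\<Sum>i = 0..<length xs. map (gq \<alpha>) xs ! i)" by (simp add: sum_list_sum_nth)
  also have "\<dots> = (\<Sum>i<length xs. gq \<alpha> (xs ! i))" by (simp add: atLeast0LessThan)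
  also have "\<dots> = (\<Sum>i<length xs. f (fst (xs ! i) \<alpha>) * snd (xs ! i))"
    by (rule sum.cong) (auto simp: gq_def split: prod.splits)
  finally show ?thesis .
qed

lemma upper_bound: assumes xs: "xs \<in> TL" shows "tn xs \<le> NR 1 * dnorm d r NS (tphi f xs)"
proof (rule field_le_epsilon)
  fix \<epsilon> :: real assume ep: "\<epsilon> > 0"
  define n where "n = length xs"
  define M where "M i = fst (xs ! i)" for i
  define T where "T i = snd (xs ! i)" for i
  have xsi: "xs ! i = (M i, T i)" for i by (simp add: M_def T_def)
  have MD: "M i \<in> Dr d r NR" if "i < n" for i
    using xs nth_mem[of i xs] that unfolding tlists_def n_def xsi by auto
  define B where "B = 1 + (\<Sum>i<n. NS (T i))"
  have TB: "NS (T i) \<le> B" if "i < n" for i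
  proof -
    have "NS (T i) \<le> (\<Sum>i<n. NS (T i))" using that by (intro member_le_sum) (auto simp: S.N_nonneg)
    then show ?thesis unfolding B_def by simp
  qed
  have Bpos: "B > 0" unfolding B_def using sum_nonneg[of "{..<n}" "\<lambda>i. NS (T i)"] S.N_nonneg by force
  define \<epsilon>' where "\<epsilon>' = \<epsilon> / B"
  have ep': "\<epsilon>' > 0" unfolding \<epsilon>'_def using ep Bpos by simp
  define F where "F = (\<Union>i<n. {\<alpha> \<in> multi_idx d. R.tm (M i) \<alpha> \<ge> \<epsilon>'})"
  have fF: "finite F" unfolding F_def using R.Dr_fin[OF MD ep'] by auto
  have Fm: "F \<subseteq> multi_idx d" unfolding F_def by auto
  define tl where "tl i = (\<lambda>\<beta>. if \<beta> \<in> F then 0 else M i \<beta>)" for i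
  define hd where "hd i = (\<lambda>\<beta>. if \<beta> \<in> F then M i \<beta> else 0)" for i
  obtain L where L: "distinct L" "set L = F" using finite_distinct_list[OF fF] by blast
  define ys where "ys = map (\<lambda>\<alpha>. (ev \<alpha>, tphi f xs \<alpha>)) L @ map (\<lambda>i. (tl i, T i)) [0..<n]"
  have tlD: "tl i \<in> Dr d r NR" if "i < n" for i
  proof -
    have "tl i = (\<lambda>\<beta>. if \<beta> \<notin> F then M i \<beta> else 0)" unfolding tl_def by auto
    then show ?thesis using Dr_restrict[OF MD[OF that]] by simp
  qed
  have hdD: "hd i \<in> Dr d r NR" if "i < n" for i
    unfolding hd_def using Dr_restrict[OF MD[OF that]] by simp
  have evD: "ev \<alpha> \<in> Dr d r NR" if "\<alpha> \<in> F" for \<alpha> using ev_Dr Fm that by auto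
  have ysL: "ys \<in> TL" unfolding ys_def tlists_def using evD tlD L by auto
  have tlN: "dnorm d r NR (tl i) \<le> \<epsilon>'" if i: "i < n" for i
  proof (rule R.dnorm_le)
    fix \<alpha> assume a: "\<alpha> \<in> multi_idx d"
    show "R.tm (tl i) \<alpha> \<le> \<epsilon>'"
    proof (cases "\<alpha> \<in> F")
      case True then show ?thesis using ep' by (simp add: R.tm_def tl_def)
    next
      case False
      then have "\<not> R.tm (M i) \<alpha> \<ge> \<epsilon>'" using a i unfolding F_def by blast
      then show ?thesis using False by (simp add: R.tm_def tl_def)
    qed
  qed
  have phiD: "tphi f xs \<in> Dr d r NS" using tphi_Dr[OF xs] by simp
  let ?bnd = "NR 1 * dnorm d r NS (tphi f xs) + \<epsilon>"
  have bnd0: "0 \<le> NR 1 * dnorm d r NS (tphi f xs)"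
    using R.N_nonneg[of 1] S.dnorm_nonneg[OF phiD] by simp
  have cost: "tc ys \<le> ?bnd"
  proof (rule tcost_le)
    show "0 \<le> ?bnd" using bnd0 ep by simp
    fix x assume "x \<in> set ys"
    then consider (a) \<alpha> where "\<alpha> \<in> F" "x = (ev \<alpha>, tphi f xs \<alpha>)" | (b) i where "i < n" "x = (tl i, T i)"
      unfolding ys_def using L by auto
    then show "cst x \<le> ?bnd"
    proof cases
      case (a \<alpha>)
      have am: "\<alpha> \<in> multi_idx d" using a Fm by auto
      have "cst x = dnorm d r NR (ev \<alpha>) * NS (tphi f xs \<alpha>)" using a by simp
      also have "\<dots> \<le> (NR 1 * r ^ mdeg d \<alpha>) * NS (tphi f xs \<alpha>)"
        by (rule mult_right_mono[OF ev_dnorm S.N_nonneg])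
      also have "\<dots> = NR 1 * S.tm (tphi f xs) \<alpha>" by (simp add: S.tm_def)
      also have "\<dots> \<le> NR 1 * dnorm d r NS (tphi f xs)"
        by (rule mult_left_mono[OF S.dnorm_ge[OF phiD am] R.N_nonneg])
      finally show ?thesis using ep by simp
    next
      case (b i)
      have "cst x = dnorm d r NR (tl i) * NS (T i)" using b by simp
      also have "\<dots> \<le> \<epsilon>' * B"
        by (rule mult_mono[OF tlN[OF b(1)] TB[OF b(1)] less_imp_le[OF ep'] S.N_nonneg])
      also have "\<epsilon>' * B = \<epsilon>" unfolding \<epsilon>'_def using Bpos by simp
      finally show ?thesis using bnd0 by simp
    qed
  qed
  have rep: "teq d r NR f ys xs"
  proof -
    define X where "X i \<alpha> = tdelta (ev \<alpha>, f (M i \<alpha>) * T i)" for i \<alpha>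
    have s1: "tfree xs = (\<lambda>q. \<Sum>i<n. tdelta (M i, T i) q)"
      by (rule ext) (simp add: tfree_sum n_def xsi)
    have s2: "eqv (\<lambda>q. \<Sum>i<n. tdelta (M i, T i) q) (\<lambda>q. \<Sum>i<n. (tdelta (hd i, T i) q + tdelta (tl i, T i) q))"
    proof (rule eqv_sum)
      fix i assume "i \<in> {..<n}"
      then have i: "i < n" by simp
      have "M i = (\<lambda>\<beta>. hd i \<beta> + tl i \<beta>)" by (rule ext) (simp add: hd_def tl_def)
      then show "eqv (tdelta (M i, T i)) (\<lambda>q. tdelta (hd i, T i) q + tdelta (tl i, T i) q)"
        using delta_addL[OF hdD[OF i] tlD[OF i], of "T i"] by simp
    qed simp
    have s3: "eqv (\<lambda>q. \<Sum>i<n. (tdelta (hd i, T i) q + tdelta (tl i, T i) q))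
        (\<lambda>q. \<Sum>i<n. ((\<Sum>\<alpha>\<in>F. X i \<alpha> q) + tdelta (tl i, T i) q))"
    proof (rule eqv_sum)
      fix i assume "i \<in> {..<n}"
      have hs: "hd i = (\<lambda>\<beta>. \<Sum>\<alpha>\<in>F. M i \<alpha> * ev \<alpha> \<beta>)"
      proof (rule ext)
        fix \<beta>
        have "(\<Sum>\<alpha>\<in>F. M i \<alpha> * ev \<alpha> \<beta>) = (\<Sum>\<alpha>\<in>F. if \<beta> = \<alpha> then M i \<alpha> else 0)"
          by (rule sum.cong) (auto simp: ev_def)
        also have "\<dots> = (if \<beta> \<in> F then M i \<beta> else 0)" using fF by simp
        finally show "hd i \<beta> = (\<Sum>\<alpha>\<in>F. M i \<alpha> * ev \<alpha> \<beta>)" by (simp add: hd_def)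
      qed
      have "eqv (tdelta (hd i, T i)) (\<lambda>q. \<Sum>\<alpha>\<in>F. tdelta (\<lambda>\<beta>. M i \<alpha> * ev \<alpha> \<beta>, T i) q)"
        unfolding hs by (rule delta_sumL[OF fF]) (rule R.Dr_scale[OF evD])
      also have "eqv \<dots> (\<lambda>q. \<Sum>\<alpha>\<in>F. X i \<alpha> q)"
        unfolding X_def by (rule eqv_sum[OF fF]) (rule delta_scal[OF evD])
      finally have "eqv (tdelta (hd i, T i)) (\<lambda>q. \<Sum>\<alpha>\<in>F. X i \<alpha> q)" .
      then show "eqv (\<lambda>q. tdelta (hd i, T i) q + tdelta (tl i, T i) q)
           (\<lambda>q. (\<Sum>\<alpha>\<in>F. X i \<alpha> q) + tdelta (tl i, T i) q)"
        by (intro eqv_add eqv_refl)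
    qed simp
    have s4: "(\<lambda>q. \<Sum>i<n. ((\<Sum>\<alpha>\<in>F. X i \<alpha> q) + tdelta (tl i, T i) q))
       = (\<lambda>q. (\<Sum>\<alpha>\<in>F. \<Sum>i<n. X i \<alpha> q) + (\<Sum>i<n. tdelta (tl i, T i) q))"
      by (rule ext) (simp add: sum.distrib sum.swap[of _ "{..<n}"])
    have s5: "eqv (\<lambda>q. (\<Sum>\<alpha>\<in>F. \<Sum>i<n. X i \<alpha> q) + (\<Sum>i<n. tdelta (tl i, T i) q))
        (\<lambda>q. (\<Sum>\<alpha>\<in>F. tdelta (ev \<alpha>, tphi f xs \<alpha>) q) + (\<Sum>i<n. tdelta (tl i, T i) q))"
    proof (intro eqv_add eqv_refl eqv_sum[OF fF])
      fix \<alpha> assume a: "\<alpha> \<in> F"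
      have tp: "tphi f xs \<alpha> = (\<Sum>i<n. f (M i \<alpha>) * T i)" unfolding tphi_nth n_def M_def T_def ..
      show "eqv (\<lambda>q. \<Sum>i<n. X i \<alpha> q) (tdelta (ev \<alpha>, tphi f xs \<alpha>))"
        unfolding tp X_def by (rule eqv_sym[OF delta_sumR[OF evD[OF a] finite_lessThan]])
    qed
    have s6: "tfree ys = (\<lambda>q. (\<Sum>\<alpha>\<in>F. tdelta (ev \<alpha>, tphi f xs \<alpha>) q) + (\<Sum>i<n. tdelta (tl i, T i) q))"
    proof (rule ext)
      fix q
      have "tfree ys q = tfree (map (\<lambda>\<alpha>. (ev \<alpha>, tphi f xs \<alpha>)) L) q + tfree (map (\<lambda>i. (tl i, T i)) [0..<n]) q"
        unfolding ys_def by (rule tfree_append)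
      also have "\<dots> = (\<Sum>\<alpha>\<in>F. tdelta (ev \<alpha>, tphi f xs \<alpha>) q) + (\<Sum>i<n. tdelta (tl i, T i) q)"
        unfolding tfree_map_distinct[OF L(1), of "\<lambda>\<alpha>. (ev \<alpha>, tphi f xs \<alpha>)"]
          tfree_map_distinct[OF distinct_upt, of "\<lambda>i. (tl i, T i)"] L(2)
        by (simp add: atLeast0LessThan)
      finally show "tfree ys q = (\<Sum>\<alpha>\<in>F. tdelta (ev \<alpha>, tphi f xs \<alpha>) q) + (\<Sum>i<n. tdelta (tl i, T i) q)" .
    qed
    have "eqv (tfree xs) (tfree ys)"
      unfolding s1 s6 using eqv_trans[OF s2 eqv_trans[OF s3 s5[folded s4]]] .
    then show ?thesis unfolding teq_eqv by (rule eqv_sym)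
  qed
  have "tn xs \<le> tc ys" by (rule tnorm_le[OF ysL rep])
  then show "tn xs \<le> NR 1 * dnorm d r NS (tphi f xs) + \<epsilon>" using cost by simp
qed

end



lemma squeeze0: fixes g h :: "nat \<Rightarrow> real"
  assumes "\<And>n. 0 \<le> g n" "\<And>n. g n \<le> h n" "h \<longlonglongrightarrow> 0" shows "g \<longlonglongrightarrow> 0"
  by (rule real_tendsto_sandwich[of "\<lambda>_. 0" g sequentially h]) (use assms in auto)

context setting begin

abbreviation "DS a b \<equiv> dnorm d r NS (\<lambda>\<alpha>. a \<alpha> - b \<alpha>)"
abbreviation "DrS \<equiv> Dr d r NS"

lemma DS_tri: assumes "a \<in> DrS" "b \<in> DrS" "c \<in> DrS" shows "DS a c \<le> DS a b + DS b c"
proof -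
  have "(\<lambda>\<alpha>. a \<alpha> - c \<alpha>) = (\<lambda>\<alpha>. (a \<alpha> - b \<alpha>) + (b \<alpha> - c \<alpha>))" by simp
  then have "DS a c \<le> max (DS a b) (DS b c)"
    using S.dnorm_add[OF S.Dr_diff[OF assms(1,2)] S.Dr_diff[OF assms(2,3)]] by simp
  moreover have "DS a b \<ge> 0" "DS b c \<ge> 0" using S.dnorm_nonneg S.Dr_diff assms by auto
  ultimately show ?thesis by linarith
qed

lemma DS_nonneg: "a \<in> DrS \<Longrightarrow> b \<in> DrS \<Longrightarrow> DS a b \<ge> 0" using S.dnorm_nonneg S.Dr_diff by blast

lemma tphi_app: "tphi f (a @ b) = (\<lambda>\<alpha>. tphi f a \<alpha> + tphi f b \<alpha>)" unfolding tphi_def by simp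
lemma tphi_tneg: "tphi f (tneg a) = (\<lambda>\<alpha>. - tphi f a \<alpha>)"
proof (induction a)
  case Nil then show ?case by (simp add: tneg_def tphi_Nil)
next
  case (Cons x a)
  obtain m t where x: "x = (m, t)" by fastforce
  have "tneg (x # a) = (m, - t) # tneg a" by (simp add: x tneg_def)
  then show ?case using Cons by (simp add: x tphi_Cons)
qed
lemma tphi_tdiff: "tphi f (tdiff a b) = (\<lambda>\<alpha>. tphi f a \<alpha> - tphi f b \<alpha>)"
  unfolding tdiff_def tphi_app tphi_tneg by simp
lemma tphi_tscale: "tphi f (tscale s a) = (\<lambda>\<alpha>. s * tphi f a \<alpha>)"
proof (induction a)
  case Nil then show ?case by (simp add: tscale_def tphi_Nil)
next
  case (Cons x a)
  obtain m t where x: "x = (m, t)" by fastforce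
  have "tscale s (x # a) = (m, s * t) # tscale s a" by (simp add: x tscale_def)
  then show ?case using Cons by (simp add: x tphi_Cons algebra_simps)
qed

lemma phiD: "a \<in> TL \<Longrightarrow> tphi f a \<in> DrS" using tphi_Dr by blast

lemma tc_TL: "tcauchy d r NR NS f u \<Longrightarrow> u n \<in> TL" unfolding tcauchy_def by blast

lemma phi_diff_le: assumes "a \<in> TL" "b \<in> TL"
  shows "DS (tphi f a) (tphi f b) \<le> Cf * tn (tdiff a b)"
  using lower_bound[OF tlists_tdiff[OF assms]] unfolding tphi_tdiff .

lemma tn_diff_le: assumes "a \<in> TL" "b \<in> TL"
  shows "tn (tdiff a b) \<le> NR 1 * DS (tphi f a) (tphi f b)"
  using upper_bound[OF tlists_tdiff[OF assms]] unfolding tphi_tdiff .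

lemma NR1_nonneg: "NR 1 \<ge> 0" by (rule R.N_nonneg)

lemma nm_unique: assumes "nat_map d r NR NS f u y" "nat_map d r NR NS f u y'" "\<And>n. u n \<in> TL"
  shows "y = y'"
proof -
  have y: "y \<in> DrS" and y': "y' \<in> DrS" using assms unfolding nat_map_def by auto
  have l1: "(\<lambda>n. DS (tphi f (u n)) y) \<longlonglongrightarrow> 0" and l2: "(\<lambda>n. DS (tphi f (u n)) y') \<longlonglongrightarrow> 0"
    using assms unfolding nat_map_def by auto
  have "(\<lambda>n. DS (tphi f (u n)) y + DS (tphi f (u n)) y') \<longlonglongrightarrow> 0 + 0" by (rule tendsto_add[OF l1 l2])
  then have lim: "(\<lambda>n. DS (tphi f (u n)) y + DS (tphi f (u n)) y') \<longlonglongrightarrow> 0" by simp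
  have bnd: "DS y y' \<le> DS (tphi f (u n)) y + DS (tphi f (u n)) y'" for n
  proof -
    have "DS y y' \<le> DS y (tphi f (u n)) + DS (tphi f (u n)) y'" by (rule DS_tri[OF y phiD[OF assms(3)] y'])
    also have "DS y (tphi f (u n)) = DS (tphi f (u n)) y" by (rule S.dnorm_diff_comm)
    finally show ?thesis .
  qed
  have z: "DS y y' \<le> 0" by (rule LIMSEQ_le_const[OF lim]) (use bnd in blast)
  have "(\<lambda>\<alpha>. y \<alpha> - y' \<alpha>) \<alpha> = 0" for \<alpha> by (rule S.dnorm_zero[OF S.Dr_diff[OF y y'] z])
  then show ?thesis by (intro ext) simp
qed

lemma nm_exists: assumes "tcauchy d r NR NS f u" shows "\<exists>y. nat_map d r NR NS f u y"
proof -
  have uL: "\<And>n. u n \<in> TL" using tc_TL[OF assms] .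
  have "\<exists>y \<in> DrS. (\<lambda>n. DS (tphi f (u n)) y) \<longlonglongrightarrow> 0"
  proof (rule S.Dr_complete[OF cplS])
    show "tphi f (u n) \<in> DrS" for n by (rule phiD[OF uL])
    fix e :: real assume e: "e > 0"
    have ec: "e / Cf > 0" using e Cf_pos by simp
    have "\<forall>e>0. \<exists>K. \<forall>m\<ge>K. \<forall>n\<ge>K. tn (tdiff (u m) (u n)) < e"
      using assms unfolding tcauchy_def by (rule conjunct2)
    then obtain K where K: "\<forall>m\<ge>K. \<forall>n\<ge>K. tn (tdiff (u m) (u n)) < e / Cf"
      using ec by blast
    have "DS (tphi f (u m)) (tphi f (u n)) < e" if "m \<ge> K" "n \<ge> K" for m n
    proof -
      have "DS (tphi f (u m)) (tphi f (u n)) \<le> Cf * tn (tdiff (u m) (u n))" by (rule phi_diff_le[OF uL uL])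
      also have "\<dots> < Cf * (e / Cf)" using K that Cf_pos by (intro mult_strict_left_mono) auto
      finally show ?thesis using Cf_pos by simp
    qed
    then show "\<exists>K. \<forall>m\<ge>K. \<forall>n\<ge>K. DS (tphi f (u m)) (tphi f (u n)) < e" by blast
  qed
  then show ?thesis unfolding nat_map_def by blast
qed

lemma nm_cequiv: assumes u: "\<And>n. u n \<in> TL" and v: "\<And>n. v n \<in> TL"
  and c: "cequiv d r NR NS f u v" and n: "nat_map d r NR NS f u y"
  shows "nat_map d r NR NS f v y"
proof -
  have y: "y \<in> DrS" and l: "(\<lambda>n. DS (tphi f (u n)) y) \<longlonglongrightarrow> 0" using n unfolding nat_map_def by auto
  have c': "(\<lambda>n. tn (tdiff (u n) (v n))) \<longlonglongrightarrow> 0" using c unfolding cequiv_def .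
  have "(\<lambda>n. DS (tphi f (v n)) y) \<longlonglongrightarrow> 0"
  proof (rule squeeze0)
    show "0 \<le> DS (tphi f (v n)) y" for n by (rule DS_nonneg[OF phiD[OF v] y])
    show "DS (tphi f (v n)) y \<le> Cf * tn (tdiff (u n) (v n)) + DS (tphi f (u n)) y" for n
    proof -
      have "DS (tphi f (v n)) y \<le> DS (tphi f (v n)) (tphi f (u n)) + DS (tphi f (u n)) y"
        by (rule DS_tri[OF phiD[OF v] phiD[OF u] y])
      also have "DS (tphi f (v n)) (tphi f (u n)) = DS (tphi f (u n)) (tphi f (v n))" by (rule S.dnorm_diff_comm)
      also have "\<dots> \<le> Cf * tn (tdiff (u n) (v n))" by (rule phi_diff_le[OF u v])
      finally show ?thesis by simp
    qed
    have "(\<lambda>n. Cf * tn (tdiff (u n) (v n)) + DS (tphi f (u n)) y) \<longlonglongrightarrow> Cf * 0 + 0"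
      by (intro tendsto_intros c' l)
    then show "(\<lambda>n. Cf * tn (tdiff (u n) (v n)) + DS (tphi f (u n)) y) \<longlonglongrightarrow> 0" by simp
  qed
  then show ?thesis using y unfolding nat_map_def by blast
qed

lemma nm_cequiv2: assumes u: "\<And>n. u n \<in> TL" and v: "\<And>n. v n \<in> TL"
  and nu: "nat_map d r NR NS f u y" and nv: "nat_map d r NR NS f v y"
  shows "cequiv d r NR NS f u v"
proof -
  have y: "y \<in> DrS" and l1: "(\<lambda>n. DS (tphi f (u n)) y) \<longlonglongrightarrow> 0" using nu unfolding nat_map_def by auto
  have l2: "(\<lambda>n. DS (tphi f (v n)) y) \<longlonglongrightarrow> 0" using nv unfolding nat_map_def by auto
  show ?thesis unfolding cequiv_def
  proof (rule squeeze0)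
    show "0 \<le> tn (tdiff (u n) (v n))" for n by (rule tnorm_nonneg[OF tlists_tdiff[OF u v]])
    show "tn (tdiff (u n) (v n)) \<le> NR 1 * (DS (tphi f (u n)) y + DS (tphi f (v n)) y)" for n
    proof -
      have "tn (tdiff (u n) (v n)) \<le> NR 1 * DS (tphi f (u n)) (tphi f (v n))" by (rule tn_diff_le[OF u v])
      also have "DS (tphi f (u n)) (tphi f (v n)) \<le> DS (tphi f (u n)) y + DS y (tphi f (v n))"
        by (rule DS_tri[OF phiD[OF u] y phiD[OF v]])
      also have "DS y (tphi f (v n)) = DS (tphi f (v n)) y" by (rule S.dnorm_diff_comm)
      finally show ?thesis using NR1_nonneg by (simp add: mult_left_mono)
    qed
    have "(\<lambda>n. NR 1 * (DS (tphi f (u n)) y + DS (tphi f (v n)) y)) \<longlonglongrightarrow> NR 1 * (0 + 0)"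
      by (intro tendsto_intros l1 l2)
    then show "(\<lambda>n. NR 1 * (DS (tphi f (u n)) y + DS (tphi f (v n)) y)) \<longlonglongrightarrow> 0" by simp
  qed
qed

end



lemma halves_aux: "(c::real) > 0 \<Longrightarrow> c * (e / (2 * c) + e / (2 * c)) = e"
  by (simp add: field_simps)

context setting begin

lemma f_1: "f 1 = 1" using fhom unfolding bounded_ring_hom_def by blast

lemma surj: assumes y: "y \<in> DrS" shows "\<exists>u. tcauchy d r NR NS f u \<and> nat_map d r NR NS f u y"
proof -
  define F where "F n = {\<alpha> \<in> multi_idx d. S.tm y \<alpha> \<ge> inverse (real (Suc n))}" for n
  have fF: "finite (F n)" for n unfolding F_def by (rule S.Dr_fin[OF y]) simp
  define L where "L n = (SOME L. distinct L \<and> set L = F n)" for n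
  have L: "distinct (L n) \<and> set (L n) = F n" for n
    unfolding L_def by (rule someI_ex) (use finite_distinct_list[OF fF] in blast)
  define u where "u n = map (\<lambda>\<alpha>. (ev \<alpha>, y \<alpha>)) (L n)" for n
  have uL: "u n \<in> TL" for n
    unfolding u_def tlists_def using L[of n] ev_Dr by (auto simp: F_def)
  have tp: "tphi f (u n) \<alpha> = (if \<alpha> \<in> F n then y \<alpha> else 0)" for n \<alpha>
  proof -
    have "tphi f (u n) \<alpha> = sum_list (map (\<lambda>\<beta>. gq \<alpha> (ev \<beta>, y \<beta>)) (L n))"
      unfolding tphi_gq u_def by (simp add: comp_def)
    also have "\<dots> = (\<Sum>\<beta>\<in>F n. gq \<alpha> (ev \<beta>, y \<beta>))"
      using L[of n] by (simp add: sum_list_distinct_conv_sum_set)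
    also have "\<dots> = (\<Sum>\<beta>\<in>F n. if \<alpha> = \<beta> then y \<beta> else 0)"
      by (rule sum.cong) (auto simp: gq_def ev_def f_1)
    also have "\<dots> = (if \<alpha> \<in> F n then y \<alpha> else 0)" using fF by simp
    finally show ?thesis .
  qed
  have DSb: "DS (tphi f (u n)) y \<le> inverse (real (Suc n))" for n
  proof (rule S.dnorm_le)
    fix \<alpha> assume a: "\<alpha> \<in> multi_idx d"
    show "S.tm (\<lambda>\<alpha>. tphi f (u n) \<alpha> - y \<alpha>) \<alpha> \<le> inverse (real (Suc n))"
    proof (cases "\<alpha> \<in> F n")
      case True then show ?thesis by (simp add: tp S.tm_def)
    next
      case False
      then have "S.tm y \<alpha> < inverse (real (Suc n))" using a unfolding F_def by auto
      then show ?thesis using False by (simp add: tp S.tm_def S.N_neg)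
    qed
  qed
  have hlim: "(\<lambda>n. inverse (real (Suc n))) \<longlonglongrightarrow> 0" by (rule LIMSEQ_inverse_real_of_nat)
  have nm: "nat_map d r NR NS f u y"
    unfolding nat_map_def
  proof (intro conjI y)
    show "(\<lambda>n. DS (tphi f (u n)) y) \<longlonglongrightarrow> 0"
      by (rule squeeze0[OF DS_nonneg[OF phiD[OF uL] y] DSb hlim])
  qed
  have tc: "tcauchy d r NR NS f u"
    unfolding tcauchy_def
  proof (intro conjI allI impI uL)
    fix e :: real assume e: "e > 0"
    let ?c = "NR 1 + 1"
    have cp: "?c > 0" using NR1_nonneg by simp
    have "e / (2 * ?c) > 0" using e cp by simp
    from LIMSEQ_D[OF hlim this] obtain K where K: "\<And>n. n \<ge> K \<Longrightarrow> norm (inverse (real (Suc n)) - 0) < e / (2 * ?c)"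
      by blast
    have "tn (tdiff (u m) (u n)) < e" if mn: "m \<ge> K" "n \<ge> K" for m n
    proof -
      have hm: "inverse (real (Suc m)) < e / (2 * ?c)" using K[OF mn(1)] by simp
      have hn: "inverse (real (Suc n)) < e / (2 * ?c)" using K[OF mn(2)] by simp
      have "tn (tdiff (u m) (u n)) \<le> NR 1 * DS (tphi f (u m)) (tphi f (u n))" by (rule tn_diff_le[OF uL uL])
      also have "DS (tphi f (u m)) (tphi f (u n)) \<le> DS (tphi f (u m)) y + DS y (tphi f (u n))"
        by (rule DS_tri[OF phiD[OF uL] y phiD[OF uL]])
      also have "DS y (tphi f (u n)) = DS (tphi f (u n)) y" by (rule S.dnorm_diff_comm)
      finally have "tn (tdiff (u m) (u n)) \<le> NR 1 * (DS (tphi f (u m)) y + DS (tphi f (u n)) y)"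
        using NR1_nonneg by (simp add: mult_left_mono)
      also have "\<dots> \<le> ?c * (inverse (real (Suc m)) + inverse (real (Suc n)))"
        using DSb[of m] DSb[of n] NR1_nonneg DS_nonneg[OF phiD[OF uL] y]
        by (intro mult_mono add_mono) auto
      also have "\<dots> < ?c * (e / (2 * ?c) + e / (2 * ?c))"
        using hm hn cp by (intro mult_strict_left_mono add_strict_mono) auto
      also have "\<dots> = e" by (rule halves_aux[OF cp])
      finally show ?thesis .
    qed
    then show "\<exists>K. \<forall>m\<ge>K. \<forall>n\<ge>K. tn (tdiff (u m) (u n)) < e" by blast
  qed
  show ?thesis using tc nm by blast
qed

lemma nm_linear: assumes u: "\<And>n. u n \<in> TL" and v: "\<And>n. v n \<in> TL"
  and nu: "nat_map d r NR NS f u y" and nv: "nat_map d r NR NS f v z"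
  shows "nat_map d r NR NS f (\<lambda>n. u n @ v n) (\<lambda>\<alpha>. y \<alpha> + z \<alpha>)
       \<and> nat_map d r NR NS f (\<lambda>n. tscale s (u n)) (\<lambda>\<alpha>. s * y \<alpha>)"
proof -
  have y: "y \<in> DrS" and l1: "(\<lambda>n. DS (tphi f (u n)) y) \<longlonglongrightarrow> 0" using nu unfolding nat_map_def by auto
  have z: "z \<in> DrS" and l2: "(\<lambda>n. DS (tphi f (v n)) z) \<longlonglongrightarrow> 0" using nv unfolding nat_map_def by auto
  have a1: "nat_map d r NR NS f (\<lambda>n. u n @ v n) (\<lambda>\<alpha>. y \<alpha> + z \<alpha>)"
    unfolding nat_map_def
  proof (intro conjI)
    show yz: "(\<lambda>\<alpha>. y \<alpha> + z \<alpha>) \<in> DrS" by (rule S.Dr_add[OF y z])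
    show "(\<lambda>n. DS (tphi f (u n @ v n)) (\<lambda>\<alpha>. y \<alpha> + z \<alpha>)) \<longlonglongrightarrow> 0"
    proof (rule squeeze0)
      show "0 \<le> DS (tphi f (u n @ v n)) (\<lambda>\<alpha>. y \<alpha> + z \<alpha>)" for n
        using DS_nonneg[OF phiD[OF tlists_append[THEN iffD2, OF conjI[OF u v]]] yz] by simp
      show "DS (tphi f (u n @ v n)) (\<lambda>\<alpha>. y \<alpha> + z \<alpha>) \<le> DS (tphi f (u n)) y + DS (tphi f (v n)) z" for n
      proof -
        have e: "(\<lambda>\<alpha>. tphi f (u n @ v n) \<alpha> - (y \<alpha> + z \<alpha>))
            = (\<lambda>\<alpha>. (tphi f (u n) \<alpha> - y \<alpha>) + (tphi f (v n) \<alpha> - z \<alpha>))"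
          by (rule ext) (simp add: tphi_app)
        have "dnorm d r NS (\<lambda>\<alpha>. (tphi f (u n) \<alpha> - y \<alpha>) + (tphi f (v n) \<alpha> - z \<alpha>))
            \<le> max (DS (tphi f (u n)) y) (DS (tphi f (v n)) z)"
          by (rule S.dnorm_add[OF S.Dr_diff[OF phiD[OF u] y] S.Dr_diff[OF phiD[OF v] z]])
        moreover have "max (DS (tphi f (u n)) y) (DS (tphi f (v n)) z) \<le> DS (tphi f (u n)) y + DS (tphi f (v n)) z"
          using DS_nonneg[OF phiD[OF u[of n]] y] DS_nonneg[OF phiD[OF v[of n]] z] by simp
        ultimately show ?thesis unfolding e by linarith
      qed
      have "(\<lambda>n. DS (tphi f (u n)) y + DS (tphi f (v n)) z) \<longlonglongrightarrow> 0 + 0" by (rule tendsto_add[OF l1 l2])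
      then show "(\<lambda>n. DS (tphi f (u n)) y + DS (tphi f (v n)) z) \<longlonglongrightarrow> 0" by simp
    qed
  qed
  have a2: "nat_map d r NR NS f (\<lambda>n. tscale s (u n)) (\<lambda>\<alpha>. s * y \<alpha>)"
    unfolding nat_map_def
  proof (intro conjI)
    show sy: "(\<lambda>\<alpha>. s * y \<alpha>) \<in> DrS" by (rule S.Dr_scale[OF y])
    show "(\<lambda>n. DS (tphi f (tscale s (u n))) (\<lambda>\<alpha>. s * y \<alpha>)) \<longlonglongrightarrow> 0"
    proof (rule squeeze0)
      show "0 \<le> DS (tphi f (tscale s (u n))) (\<lambda>\<alpha>. s * y \<alpha>)" for n
        using DS_nonneg[OF phiD[OF tlists_tscale[OF u]] sy] by simp
      show "DS (tphi f (tscale s (u n))) (\<lambda>\<alpha>. s * y \<alpha>) \<le> NS s * DS (tphi f (u n)) y" for n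
      proof -
        have e: "(\<lambda>\<alpha>. tphi f (tscale s (u n)) \<alpha> - s * y \<alpha>) = (\<lambda>\<alpha>. s * (tphi f (u n) \<alpha> - y \<alpha>))"
          by (rule ext) (simp add: tphi_tscale algebra_simps)
        show ?thesis unfolding e by (rule S.dnorm_scale[OF S.Dr_diff[OF phiD[OF u] y]])
      qed
      have "(\<lambda>n. NS s * DS (tphi f (u n)) y) \<longlonglongrightarrow> NS s * 0" by (intro tendsto_intros l1)
      then show "(\<lambda>n. NS s * DS (tphi f (u n)) y) \<longlonglongrightarrow> 0" by simp
    qed
  qed
  show ?thesis using a1 a2 by blast
qed

lemma tn_conv: assumes "tcauchy d r NR NS f u" shows "(\<lambda>n. tn (u n)) \<longlonglongrightarrow> cnorm d r NR NS f u"
proof -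
  have uL: "\<And>n. u n \<in> TL" using tc_TL[OF assms] .
  have "Cauchy (\<lambda>n. tn (u n))"
  proof (rule CauchyI)
    fix e :: real assume e: "0 < e"
    have "\<forall>e>0. \<exists>K. \<forall>m\<ge>K. \<forall>n\<ge>K. tn (tdiff (u m) (u n)) < e"
      using assms unfolding tcauchy_def by (rule conjunct2)
    then obtain K where K: "\<forall>m\<ge>K. \<forall>n\<ge>K. tn (tdiff (u m) (u n)) < e" using e by blast
    have "norm (tn (u m) - tn (u n)) < e" if "m \<ge> K" "n \<ge> K" for m n
    proof -
      have "tn (tdiff (u m) (u n)) < e" using K that by blast
      then show ?thesis using tnorm_tri[OF uL uL, of m n] by simp
    qed
    then show "\<exists>M. \<forall>m\<ge>M. \<forall>n\<ge>M. norm (tn (u m) - tn (u n)) < e" by blast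
  qed
  then have "convergent (\<lambda>n. tn (u n))" by (rule real_Cauchy_convergent)
  then show ?thesis unfolding cnorm_def convergent_LIMSEQ_iff .
qed

lemma phi_conv: assumes uL: "\<And>n. u n \<in> TL" and nu: "nat_map d r NR NS f u y"
  shows "(\<lambda>n. dnorm d r NS (tphi f (u n))) \<longlonglongrightarrow> dnorm d r NS y"
proof -
  have y: "y \<in> DrS" and l: "(\<lambda>n. DS (tphi f (u n)) y) \<longlonglongrightarrow> 0" using nu unfolding nat_map_def by auto
  have "(\<lambda>n. dnorm d r NS (tphi f (u n)) - dnorm d r NS y) \<longlonglongrightarrow> 0"
  proof (rule Lim_null_comparison[OF _ l])
    show "\<forall>\<^sub>F n in sequentially. norm (dnorm d r NS (tphi f (u n)) - dnorm d r NS y) \<le> DS (tphi f (u n)) y"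
      using S.dnorm_abs[OF phiD[OF uL] y] by simp
  qed
  then show ?thesis by (simp add: LIM_zero_iff)
qed

lemma iso: "natural_map_iso d r NR NS f"
  unfolding natural_map_iso_def
proof (intro conjI allI impI)
  fix u assume u: "tcauchy d r NR NS f u"
  show "\<exists>!y. nat_map d r NR NS f u y"
  proof -
    have uL: "\<And>n. u n \<in> TL" by (rule tc_TL[OF u])
    show ?thesis using nm_exists[OF u] nm_unique[where u=u, OF _ _ uL] by blast
  qed
next
  fix u v y assume a: "tcauchy d r NR NS f u \<and> tcauchy d r NR NS f v \<and> cequiv d r NR NS f u v \<and> nat_map d r NR NS f u y"
  then have u: "tcauchy d r NR NS f u" and v: "tcauchy d r NR NS f v" by auto
  have uL: "\<And>n. u n \<in> TL" by (rule tc_TL[OF u])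
  have vL: "\<And>n. v n \<in> TL" by (rule tc_TL[OF v])
  show "nat_map d r NR NS f v y" using a nm_cequiv[where u=u and v=v, OF uL vL] by blast
next
  fix u v y assume a: "tcauchy d r NR NS f u \<and> tcauchy d r NR NS f v \<and> nat_map d r NR NS f u y \<and> nat_map d r NR NS f v y"
  then have u: "tcauchy d r NR NS f u" and v: "tcauchy d r NR NS f v" by auto
  have uL: "\<And>n. u n \<in> TL" by (rule tc_TL[OF u])
  have vL: "\<And>n. v n \<in> TL" by (rule tc_TL[OF v])
  show "cequiv d r NR NS f u v" using a nm_cequiv2[where u=u and v=v, OF uL vL] by blast
next
  show "\<forall>y\<in>DrS. \<exists>u. tcauchy d r NR NS f u \<and> nat_map d r NR NS f u y" using surj by blast
next
  fix u v y z assume a: "tcauchy d r NR NS f u \<and> tcauchy d r NR NS f v \<and> nat_map d r NR NS f u y \<and> nat_map d r NR NS f v z"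
  then have u: "tcauchy d r NR NS f u" and v: "tcauchy d r NR NS f v" by auto
  have uL: "\<And>n. u n \<in> TL" by (rule tc_TL[OF u])
  have vL: "\<And>n. v n \<in> TL" by (rule tc_TL[OF v])
  show "nat_map d r NR NS f (\<lambda>n. u n @ v n) (\<lambda>\<alpha>. y \<alpha> + z \<alpha>)"
    using a nm_linear[where u=u and v=v, OF uL vL] by blast
next
  fix u v y z s assume a: "tcauchy d r NR NS f u \<and> tcauchy d r NR NS f v \<and> nat_map d r NR NS f u y \<and> nat_map d r NR NS f v z"
  then have u: "tcauchy d r NR NS f u" and v: "tcauchy d r NR NS f v" by auto
  have uL: "\<And>n. u n \<in> TL" by (rule tc_TL[OF u])
  have vL: "\<And>n. v n \<in> TL" by (rule tc_TL[OF v])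
  show "nat_map d r NR NS f (\<lambda>n. tscale s (u n)) (\<lambda>\<alpha>. s * y \<alpha>)"
    using a nm_linear[where u=u and v=v, OF uL vL] by blast
next
  show "\<exists>C. \<forall>u y. tcauchy d r NR NS f u \<and> nat_map d r NR NS f u y \<longrightarrow> dnorm d r NS y \<le> C * cnorm d r NR NS f u"
  proof (intro exI allI impI)
    fix u y assume a: "tcauchy d r NR NS f u \<and> nat_map d r NR NS f u y"
    then have u: "tcauchy d r NR NS f u" and n: "nat_map d r NR NS f u y" by auto
    have uL: "\<And>n. u n \<in> TL" by (rule tc_TL[OF u])
    have l2: "(\<lambda>n. Cf * tn (u n)) \<longlonglongrightarrow> Cf * cnorm d r NR NS f u" by (intro tendsto_intros tn_conv[OF u])
    show "dnorm d r NS y \<le> Cf * cnorm d r NR NS f u"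
      by (rule LIMSEQ_le[OF phi_conv[where u=u, OF uL n] l2]) (use lower_bound[OF uL] in blast)
  qed
next
  show "\<exists>C. \<forall>u y. tcauchy d r NR NS f u \<and> nat_map d r NR NS f u y \<longrightarrow> cnorm d r NR NS f u \<le> C * dnorm d r NS y"
  proof (intro exI allI impI)
    fix u y assume a: "tcauchy d r NR NS f u \<and> nat_map d r NR NS f u y"
    then have u: "tcauchy d r NR NS f u" and n: "nat_map d r NR NS f u y" by auto
    have uL: "\<And>n. u n \<in> TL" by (rule tc_TL[OF u])
    have l2: "(\<lambda>n. NR 1 * dnorm d r NS (tphi f (u n))) \<longlonglongrightarrow> NR 1 * dnorm d r NS y"
      by (intro tendsto_intros phi_conv[where u=u, OF uL n])
    show "cnorm d r NR NS f u \<le> NR 1 * dnorm d r NS y"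
      by (rule LIMSEQ_le[OF tn_conv[OF u] l2]) (use upper_bound[OF uL] in blast)
  qed
qed

end

theorem mainTheorem8:
  fixes p :: nat and G :: "('g, 'b) monoid_scheme" and T :: "'g topology"
    and d :: nat and g :: "nat \<Rightarrow> 'g"
    and NR :: "'r::comm_ring_1 \<Rightarrow> real" and iR :: "(nat \<Rightarrow> int) \<Rightarrow> 'r"
    and NS :: "'s::comm_ring_1 \<Rightarrow> real" and iS :: "(nat \<Rightarrow> int) \<Rightarrow> 's"
    and f :: "'r \<Rightarrow> 's" and w :: 'r and r :: real
  assumes "prime p"
    and "uniform_pro_p p G T"
    and "min_top_generators G T d g"
    and "banach_tate_zp p NR iR"
    and "banach_tate_zp p NS iS"
    and "bounded_ring_hom NR NS f"
    and "mult_pseudo_unif NR w"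
    and "mult_elem NS (f w)"
    and "1 / real p \<le> r" and "r < 1"
  shows "natural_map_iso d r NR NS f"
proof -
  have nR: "nonarch_norm NR" using assms(4) unfolding banach_tate_zp_def by blast
  have nS: "nonarch_norm NS" and cS: "norm_complete NS" using assms(5) unfolding banach_tate_zp_def by blast+
  have "real p > 0" using assms(1) prime_gt_0_nat by simp
  then have rp: "r > 0" using assms(9) by (smt (verit) divide_pos_pos)
  interpret setting d r NR NS f using nR nS rp assms(6) cS by unfold_locales
  show ?thesis by (rule iso)
qed

end
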